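(* Let $\mathcal{C}$ be the class of all Myerson-regular distributions supported on $[0,1]$. For every sufficiently small $\epsilon>0$, it is possible to describe $\mathcal{C}$ with $b=\tilde{O}(\epsilon^{-1/2})$ bits and error $\epsilon$. Moreover this is tight up to polylogarithmic factors: any description of $\mathcal{C}$ with error $\epsilon$ requires $b=\Omega(\epsilon^{-1/2})$ bits.
   Context: A distribution with CDF $F$ is (Myerson-)regular if its revenue curve in quantile space $R(q)=q\cdot F^{-1}(1-q)$ is concave on $[0,1]$; for distributions with a differentiable PDF $f$ and no point masses this is equivalent to $f'(v)(1-F(v))\ge -2f(v)^2$. The Lévy distance between CDFs $F,G$ is $\mathrm{L\acute{e}vy}(F,G)=\inf\{\epsilon: F(v-\epsilon)-\epsilon\le G(v)\le F(v+\epsilon)+\epsilon\ \forall v\}$. A class of distributions $\mathcal{C}$ can be described with $b$ bits and error $\epsilon$ if there is a class $\mathcal{C}'$ of distributions with $|\mathcal{C}'|\le 2^b$ such that for every $F\in\mathcal{C}$ there is $F'\in\mathcal{C}'$ with $\mathrm{L\acute{e}vy}(F,F')\le\epsilon$. $\tilde{O}(\cdot)$ hides factors polylogarithmic in $1/\epsilon$. *)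

theory Defs
  imports "HOL-Analysis.Analysis"
begin

definition is_cdf :: "(real \<Rightarrow> real) \<Rightarrow> bool" where
  "is_cdf F \<longleftrightarrow> mono F \<and> (\<forall>x. continuous (at_right x) F)
      \<and> (F \<longlongrightarrow> 0) at_bot \<and> (F \<longlongrightarrow> 1) at_top"

definition supported_01 :: "(real \<Rightarrow> real) \<Rightarrow> bool" where
  "supported_01 F \<longleftrightarrow> (\<forall>v<0. F v = 0) \<and> F 1 = 1"

text \<open>Left limit F(v-) = Pr[X < v].\<close>
definition cdf_left :: "(real \<Rightarrow> real) \<Rightarrow> real \<Rightarrow> real" where
  "cdf_left F v = Sup (F ` {..<v})"

text \<open>Quantile value F^{-1}(1-q) for a distribution on [0,1]: the largest price v
  in [0,1] that sells with probability at least q, i.e. Pr[X \<ge> v] \<ge> q.\<close>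
definition price_at :: "(real \<Rightarrow> real) \<Rightarrow> real \<Rightarrow> real" where
  "price_at F q = Sup {v \<in> {0..1}. 1 - cdf_left F v \<ge> q}"

definition revenue_curve :: "(real \<Rightarrow> real) \<Rightarrow> real \<Rightarrow> real" where
  "revenue_curve F q = q * price_at F q"

definition myerson_regular :: "(real \<Rightarrow> real) \<Rightarrow> bool" where
  "myerson_regular F \<longleftrightarrow> concave_on {0..1} (revenue_curve F)"

definition regular_01 :: "(real \<Rightarrow> real) set" where
  "regular_01 = {F. is_cdf F \<and> supported_01 F \<and> myerson_regular F}"

definition levy_dist :: "(real \<Rightarrow> real) \<Rightarrow> (real \<Rightarrow> real) \<Rightarrow> real" where
  "levy_dist F G = Inf {e. e \<ge> 0 \<and> (\<forall>v. F (v - e) - e \<le> G v \<and> G v \<le> F (v + e) + e)}"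

definition describable :: "(real \<Rightarrow> real) set \<Rightarrow> nat \<Rightarrow> real \<Rightarrow> bool" where
  "describable \<C> b \<epsilon> \<longleftrightarrow> (\<exists>\<C>'. finite \<C>' \<and> card \<C>' \<le> 2 ^ b \<and> (\<forall>G\<in>\<C>'. is_cdf G)
      \<and> (\<forall>F\<in>\<C>. \<exists>G\<in>\<C>'. levy_dist F G \<le> \<epsilon>))"

end

theory Submission
  imports Defs
begin


definition TT :: "(real \<Rightarrow> real) \<Rightarrow> real \<Rightarrow> real" where
  "TT F v = 1 - cdf_left F v"

locale cdf01 =
  fixes F :: "real \<Rightarrow> real"
  assumes cdf: "is_cdf F" and supp: "supported_01 F"
begin

lemma monoF: "x \<le> y \<Longrightarrow> F x \<le> F y"
  using cdf unfolding is_cdf_def mono_def by auto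

lemma F_neg: "v < 0 \<Longrightarrow> F v = 0" using supp unfolding supported_01_def by auto
lemma F_one: "F 1 = 1" using supp unfolding supported_01_def by auto

lemma F_nonneg: "0 \<le> F v"
proof (cases "v < 0")
  case True then show ?thesis using F_neg by simp
next
  case False then have "F (-1) \<le> F v" by (intro monoF) auto
  then show ?thesis using F_neg[of "-1"] by simp
qed

lemma F_le1: "F v \<le> 1"
proof -
  have lim: "(F \<longlongrightarrow> 1) at_top" using cdf unfolding is_cdf_def by auto
  have "eventually (\<lambda>y. F v \<le> F y) at_top"
    using eventually_ge_at_top[of v] by eventually_elim (rule monoF)
  from tendsto_lowerbound[OF lim this] show ?thesis by simp
qed

lemma F_ge1: "1 \<le> v \<Longrightarrow> F v = 1"
  using monoF[of 1 v] F_one F_le1[of v] by simp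

lemma bddF: "bdd_above (F ` A)"
  by (rule bdd_aboveI[where M=1]) (auto simp: F_le1)

lemma cl_upper: "u < v \<Longrightarrow> F u \<le> cdf_left F v"
  unfolding cdf_left_def by (rule cSUP_upper) (auto simp: bddF)

lemma cl_le: "cdf_left F v \<le> F v"
  unfolding cdf_left_def by (rule cSUP_least) (auto intro: monoF)

lemma cl_least: "(\<And>u. u < v \<Longrightarrow> F u \<le> c) \<Longrightarrow> cdf_left F v \<le> c"
  unfolding cdf_left_def by (rule cSUP_least) auto

lemma cl_nonneg: "0 \<le> cdf_left F v"
  using cl_upper[of "v-1" v] F_nonneg[of "v-1"] by simp

lemma cl_le1: "cdf_left F v \<le> 1" using cl_le F_le1 order_trans by blast

lemma cl_zero: "v \<le> 0 \<Longrightarrow> cdf_left F v = 0"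
  using cl_least[of v 0] cl_nonneg[of v] F_neg by force

lemma cl_mono: "u \<le> v \<Longrightarrow> cdf_left F u \<le> cdf_left F v"
  by (rule cl_least) (auto intro: cl_upper)

lemma TT_mono: "u \<le> v \<Longrightarrow> TT F v \<le> TT F u"
  unfolding TT_def using cl_mono by auto

lemma TT_zero: "v \<le> 0 \<Longrightarrow> TT F v = 1" unfolding TT_def using cl_zero by simp

lemma TT_range: "0 \<le> TT F v" "TT F v \<le> 1" unfolding TT_def using cl_nonneg cl_le1 by auto

definition S where "S q = {v \<in> {0..1}. 1 - cdf_left F v \<ge> q}"

lemma S_ne: "q \<le> 1 \<Longrightarrow> 0 \<in> S q" unfolding S_def using cl_zero[of 0] by auto
lemma S_bdd: "bdd_above (S q)" unfolding S_def by (rule bdd_aboveI[where M=1]) auto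

lemma P_def': "price_at F q = Sup (S q)" unfolding price_at_def S_def by simp

lemma P_range: "q \<le> 1 \<Longrightarrow> 0 \<le> price_at F q \<and> price_at F q \<le> 1"
proof -
  assume q: "q \<le> 1"
  have "0 \<le> Sup (S q)" using cSup_upper[OF S_ne[OF q] S_bdd] .
  moreover have "Sup (S q) \<le> 1" using S_ne[OF q] by (intro cSup_least) (blast, auto simp: S_def)
  ultimately show ?thesis by (simp add: P_def')
qed

lemma galois1: "u \<in> {0..1} \<Longrightarrow> TT F u \<ge> q \<Longrightarrow> u \<le> price_at F q"
  unfolding P_def' by (rule cSup_upper) (auto simp: S_def TT_def S_bdd)

lemma galois2: "u \<in> {0..1} \<Longrightarrow> u > price_at F q \<Longrightarrow> TT F u < q"
  using galois1[of u q] by linarith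

lemma P_anti: "q \<le> q' \<Longrightarrow> q' \<le> 1 \<Longrightarrow> price_at F q' \<le> price_at F q"
  unfolding P_def' by (rule cSup_subset_mono) (use S_ne[of q'] in blast, auto simp: S_def S_bdd)

lemma P_approx: "q \<le> 1 \<Longrightarrow> d > 0 \<Longrightarrow> \<exists>u\<in>{0..1}. TT F u \<ge> q \<and> u > price_at F q - d"
proof -
  assume q: "q \<le> 1" and d: "d > 0"
  have "\<exists>u\<in>S q. Sup (S q) - d < u"
    using less_cSupD[of "S q" "Sup (S q) - d"] S_ne[OF q] S_bdd d by auto
  then show ?thesis unfolding P_def' S_def TT_def by auto
qed

end


context cdf01 begin

abbreviation "R \<equiv> revenue_curve F"

lemma R_range: "q \<in> {0..1} \<Longrightarrow> 0 \<le> R q \<and> R q \<le> q"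
  using P_range[of q] unfolding revenue_curve_def
  by (auto intro: mult_nonneg_nonneg mult_left_le)

lemma R_zero: "R 0 = 0" unfolding revenue_curve_def by simp

lemma regular_suff:
  assumes H: "\<And>v1 v2 q1 q2 l. v1\<in>{0..1} \<Longrightarrow> v2\<in>{0..1} \<Longrightarrow> 0\<le>q1 \<Longrightarrow> 0\<le>q2 \<Longrightarrow> 0 \<le> l \<Longrightarrow> l \<le> 1
     \<Longrightarrow> TT F v1 \<ge> q1 \<Longrightarrow> TT F v2 \<ge> q2 \<Longrightarrow> l*q1+(1-l)*q2 > 0
     \<Longrightarrow> TT F ((l*q1 * v1+(1-l)*q2 * v2)/(l*q1+(1-l)*q2)) \<ge> l*q1+(1-l)*q2"
  shows "myerson_regular F"
  unfolding myerson_regular_def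
proof (rule concave_on_linorderI)
  show "convex {0..1::real}" by simp
  fix t x y :: real assume t: "0 < t" "t < 1" and x: "x \<in> {0..1}" and y: "y \<in> {0..1}" and xy: "x < y"
  define q where "q = (1-t)*x + t*y"
  have "t*y > 0" using t x y xy by auto
  moreover have "(1-t)*x \<ge> 0" using t x by auto
  ultimately have qpos: "q > 0" unfolding q_def by linarith
  have "(1-t)*x \<le> (1-t)" using t x by (intro mult_left_le) auto
  moreover have "t*y \<le> t" using t y by (intro mult_left_le) auto
  ultimately have q1: "q \<le> 1" unfolding q_def by linarith
  have "q * price_at F q \<ge> (1-t) * (x * price_at F x) + t * (y * price_at F y)"
  proof (rule field_le_epsilon)
    fix d :: real assume d: "d > 0"
    obtain u1 where u1: "u1 \<in> {0..1}" "TT F u1 \<ge> x" "u1 > price_at F x - d" using P_approx[of x d] x d by auto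
    obtain u2 where u2: "u2 \<in> {0..1}" "TT F u2 \<ge> y" "u2 > price_at F y - d" using P_approx[of y d] y d by auto
    define w where "w = ((1-t)*x*u1 + (1-(1-t))*y*u2)/((1-t)*x+(1-(1-t))*y)"
    have qq: "(1-t)*x+(1-(1-t))*y = q" unfolding q_def by simp
    have Tw: "TT F w \<ge> q" unfolding w_def qq[symmetric]
      by (rule H) (use u1 u2 x y t qpos qq in auto)
    have num: "(1-t)*x*u1 + t*y*u2 \<le> q"
    proof -
      have "(1-t)*x*u1 \<le> (1-t)*x" using u1 t x by (intro mult_left_le) auto
      moreover have "t*y*u2 \<le> t*y" using u2 t y by (intro mult_left_le) auto
      ultimately show ?thesis unfolding q_def by simp
    qed
    have num0: "0 \<le> (1-t)*x*u1 + t*y*u2" using u1 u2 t x y by auto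
    have w01: "w \<in> {0..1}" unfolding w_def using num num0 qpos qq by (auto simp: divide_le_eq_1)
    have "w \<le> price_at F q" by (rule galois1[OF w01 Tw])
    hence "q * w \<le> q * price_at F q" using qpos by simp
    moreover have "q * w = (1-t)*x*u1 + t*y*u2" unfolding w_def qq using qpos by simp
    moreover have "(1-t)*x*u1 \<ge> (1-t)*x*(price_at F x - d)" using u1 t x by (intro mult_left_mono) auto
    moreover have "t*y*u2 \<ge> t*y*(price_at F y - d)" using u2 t y by (intro mult_left_mono) auto
    moreover have "(1-t)*x*d + t*y*d \<le> d"
    proof -
      have "(1-t)*x*d + t*y*d = q*d" by (simp add: q_def algebra_simps)
      also have "\<dots> \<le> d" using q1 qpos d by (intro mult_left_le_one_le) auto
      finally show ?thesis .
    qed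
    ultimately show "(1 - t) * (x * price_at F x) + t * (y * price_at F y) \<le> q * price_at F q + d"
      by (simp add: algebra_simps)
  qed
  then show "(1 - t) * R x + t * R y \<le> R ((1 - t) *\<^sub>R x + t *\<^sub>R y)"
    unfolding revenue_curve_def q_def by simp
qed

lemma three_point:
  assumes reg: "myerson_regular F" and "0 \<le> x" "x < z" "z < y" "y \<le> 1"
  shows "(y - z) * R x + (z - x) * R y \<le> (y - x) * R z"
proof -
  define t where "t = (z-x)/(y-x)"
  have t: "0 \<le> t" "t \<le> 1" unfolding t_def using assms by auto
  have e1: "t*(y-x) = z - x" unfolding t_def using assms by simp
  have zt: "(1-t) *\<^sub>R x + t *\<^sub>R y = z"
  proof -
    have "(1-t) *\<^sub>R x + t *\<^sub>R y = x + t*(y-x)" by (simp add: algebra_simps)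
    then show ?thesis using e1 by simp
  qed
  have "R z \<ge> (1-t) * R x + t * R y"
    using concave_onD[OF reg[unfolded myerson_regular_def] t, of x y] zt assms by auto
  hence "(y-x) * R z \<ge> (y-x) * ((1-t) * R x + t * R y)" using assms by (intro mult_left_mono) auto
  also have "(y-x) * ((1-t) * R x + t * R y) = ((y-x) - t*(y-x)) * R x + (t*(y-x)) * R y"
    by (simp add: algebra_simps)
  also have "\<dots> = (y - z) * R x + (z - x) * R y" using e1 by simp
  finally show ?thesis .
qed

end


definition Gdec :: "nat \<Rightarrow> (nat \<Rightarrow> real) \<Rightarrow> real \<Rightarrow> real" where
  "Gdec n p v = real (card {j \<in> {1..n}. p j \<le> v}) / real n"

lemma Gdec_cdf:
  assumes n: "n \<ge> 1"
  shows "is_cdf (Gdec n p)"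
  unfolding is_cdf_def
proof (intro conjI allI)
  show "mono (Gdec n p)"
    unfolding mono_def Gdec_def
    by (auto intro!: divide_right_mono card_mono)
next
  fix x
  have ev: "eventually (\<lambda>y. \<forall>j\<in>{1..n}. (p j \<le> y \<longleftrightarrow> p j \<le> x)) (at_right x)"
  proof (rule eventually_ball_finite)
    show "\<forall>j\<in>{1..n}. eventually (\<lambda>y. (p j \<le> y \<longleftrightarrow> p j \<le> x)) (at_right x)"
    proof
      fix j
      show "eventually (\<lambda>y. (p j \<le> y \<longleftrightarrow> p j \<le> x)) (at_right x)"
      proof (cases "p j \<le> x")
        case True
        show ?thesis using eventually_at_right_less[of x] by eventually_elim (use True in auto)
      next
        case False
        hence "eventually (\<lambda>y. y < p j) (at_right x)"
          unfolding eventually_at_right_field by (intro exI[of _ "p j"]) auto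
        then show ?thesis by eventually_elim (use False in auto)
      qed
    qed
  qed simp
  have "eventually (\<lambda>y. Gdec n p y = Gdec n p x) (at_right x)"
    using ev by eventually_elim (auto simp: Gdec_def intro!: arg_cong[where f=card])
  then have "(Gdec n p \<longlongrightarrow> Gdec n p x) (at_right x)"
    by (rule tendsto_eventually)
  then show "continuous (at_right x) (Gdec n p)"
    by (simp add: continuous_within)
next
  have "eventually (\<lambda>y. \<forall>j\<in>{1..n}. y < p j) at_bot"
    by (rule eventually_ball_finite) (auto intro: eventually_gt_at_bot)
  then have "eventually (\<lambda>y. Gdec n p y = 0) at_bot"
    by eventually_elim (force simp: Gdec_def)
  then show "(Gdec n p \<longlongrightarrow> 0) at_bot" by (rule tendsto_eventually)
next
  have "eventually (\<lambda>y. \<forall>j\<in>{1..n}. p j \<le> y) at_top"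
    by (rule eventually_ball_finite) (auto intro: eventually_ge_at_top)
  then have "eventually (\<lambda>y. Gdec n p y = 1) at_top"
  proof eventually_elim
    case (elim y)
    then have "{j \<in> {1..n}. p j \<le> y} = {1..n}" by auto
    then show ?case using n by (simp add: Gdec_def)
  qed
  then show "(Gdec n p \<longlongrightarrow> 1) at_top" by (rule tendsto_eventually)
qed


lemma card_gt_set: "y \<ge> 0 \<Longrightarrow> {j \<in> {1..n}. y < real j} = {nat \<lfloor>y\<rfloor> + 1..n}"
proof -
  assume y: "y \<ge> 0"
  have "\<And>j::nat. y < real j \<longleftrightarrow> nat \<lfloor>y\<rfloor> < j"
  proof -
    fix j :: nat
    have "y < real j \<longleftrightarrow> \<lfloor>y\<rfloor> < int j" by (simp add: floor_less_iff)
    also have "\<dots> \<longleftrightarrow> nat \<lfloor>y\<rfloor> < j" using y by linarith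
    finally show "y < real j \<longleftrightarrow> nat \<lfloor>y\<rfloor> < j" .
  qed
  then show ?thesis
  proof (intro set_eqI)
    fix j assume h: "\<And>j::nat. y < real j \<longleftrightarrow> nat \<lfloor>y\<rfloor> < j"
    show "j \<in> {j \<in> {1..n}. y < real j} \<longleftrightarrow> j \<in> {nat \<lfloor>y\<rfloor> + 1..n}"
      unfolding mem_Collect_eq atLeastAtMost_iff h[of j] by linarith
  qed
qed

lemma card_gt_upper: "real (card {j \<in> {1..n}. y < real j}) \<le> max 0 (real n - y + 1)"
proof (cases "y \<ge> 0")
  case True
  have c: "card {j \<in> {1..n}. y < real j} = n - nat \<lfloor>y\<rfloor>" using card_gt_set[OF True] by simp
  have "real (nat \<lfloor>y\<rfloor>) > y - 1" using True by linarith
  then show ?thesis unfolding c by (cases "nat \<lfloor>y\<rfloor> \<le> n") (auto simp: of_nat_diff)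
next
  case False
  then have "{j \<in> {1..n}. y < real j} = {1..n}" by auto
  moreover have "real n \<le> max 0 (real n - y + 1)" using False by linarith
  ultimately show ?thesis by simp
qed

lemma card_gt_lower: assumes True: "y \<ge> 0" shows "real (card {j \<in> {1..n}. y < real j}) \<ge> real n - y - 1"
proof -
  have c: "card {j \<in> {1..n}. y < real j} = n - nat \<lfloor>y\<rfloor>" using card_gt_set[OF True] by simp
  have "real (nat \<lfloor>y\<rfloor>) \<le> y" using True by linarith
  then show ?thesis unfolding c by (cases "nat \<lfloor>y\<rfloor> \<le> n") (auto simp: of_nat_diff)
qed

context cdf01 begin

lemma levy_bound:
  assumes n: "n \<ge> 1" and e: "e > 0" and ne: "1 / real n \<le> e/4"
    and A1: "\<And>j. j\<in>{1..n} \<Longrightarrow> real j / n + e/2 \<le> 1 \<Longrightarrow> price_at F (real j / n + e/2) - e/2 \<le> p j"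
    and A2: "\<And>j. j\<in>{1..n} \<Longrightarrow> real j / n - e/2 > 0 \<Longrightarrow> p j \<le> price_at F (real j / n - e/2) + e/2"
  shows "levy_dist F (Gdec n p) \<le> e"
proof -
  have np: "real n > 0" using n by simp
  have G1: "Gdec n p v \<le> 1" for v
  proof -
    have "card {j \<in> {1..n}. p j \<le> v} \<le> card {1..n}" by (rule card_mono) auto
    then show ?thesis unfolding Gdec_def using np by (simp add: divide_le_eq_1)
  qed
  have G0: "0 \<le> Gdec n p v" for v unfolding Gdec_def by simp
  have a: "Gdec n p v \<le> F (v + e) + e" for v
  proof (cases "v + e \<ge> 1")
    case True
    then show ?thesis using G1[of v] F_ge1[of "v+e"] e by simp
  next
    case False
    define u where "u = v + e"
    have u1: "u < 1" using False u_def by simp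
    have sub: "{j \<in> {1..n}. p j \<le> v} \<subseteq> {j \<in> {1..n}. real n * (TT F u - e/2) < real j}"
    proof safe
      fix j assume j: "j \<in> {1..n}" "p j \<le> v"
      show "real n * (TT F u - e/2) < real j"
      proof (cases "real j / n + e/2 \<le> 1")
        case True
        have "price_at F (real j / n + e/2) \<le> p j + e/2" using A1[OF j(1) True] by simp
        also have "\<dots> < u" using j u_def e by simp
        finally have lt: "price_at F (real j / n + e/2) < u" .
        have "0 \<le> price_at F (real j / n + e/2)" using P_range True by blast
        hence "u \<in> {0..1}" using lt u1 by auto
        from galois2[OF this lt] have "TT F u - e/2 < real j / n" by simp
        then show ?thesis using np by (simp add: field_simps)
      next
        case False
        hence "TT F u - e/2 < real j / n" using TT_range[of u] by simp
        then show ?thesis using np by (simp add: field_simps)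
      qed
    qed
    have "real (card {j \<in> {1..n}. p j \<le> v}) \<le> real (card {j \<in> {1..n}. real n * (TT F u - e/2) < real j})"
      by (intro of_nat_mono card_mono sub) auto
    also have "\<dots> \<le> max 0 (real n - real n * (TT F u - e/2) + 1)" by (rule card_gt_upper)
    finally have c: "real (card {j \<in> {1..n}. p j \<le> v}) / real n \<le> max 0 (real n - real n * (TT F u - e/2) + 1) / real n"
      using np by (intro divide_right_mono) auto
    have "max 0 (real n - real n * (TT F u - e/2) + 1) / real n = max 0 (1 - (TT F u - e/2) + 1 / real n)"
      using np by (simp add: add_divide_distrib diff_divide_distrib max_divide_distrib_right)
    also have "\<dots> \<le> max 0 (cdf_left F u + e)"
    proof -
      have "1 - (TT F u - e/2) + 1 / real n \<le> cdf_left F u + e" using ne e unfolding TT_def by linarith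
      then show ?thesis by (intro max.mono) auto
    qed
    also have "\<dots> \<le> F u + e" using cl_le[of u] cl_nonneg[of u] e by auto
    finally show ?thesis using c unfolding Gdec_def u_def by simp
  qed
  have b: "F (v - e) - e \<le> Gdec n p v" for v
  proof -
    define s where "s = F (v - e)"
    have s1': "s \<le> 1" unfolding s_def by (rule F_le1)
    have sub: "{j \<in> {1..n}. real n * (1 - s + e/2) < real j} \<subseteq> {j \<in> {1..n}. p j \<le> v}"
    proof safe
      fix j assume j: "j \<in> {1..n}" "real n * (1 - s + e / 2) < real j"
      define q where "q = real j / n - e/2"
      have qgt: "q > 1 - s" using j np unfolding q_def by (simp add: field_simps)
      have s1: "s \<le> 1" unfolding s_def by (rule F_le1)
      have qpos: "q > 0" using qgt s1 by simp
      have jn: "real j / n \<le> 1" using j np by auto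
      have q1: "q \<le> 1" using jn e unfolding q_def by simp
      have "price_at F q \<le> v - e" unfolding P_def'
      proof (rule cSup_least)
        show "S q \<noteq> {}" using S_ne[OF q1] by blast
        fix u assume "u \<in> S q"
        hence uS: "1 - cdf_left F u \<ge> q" unfolding S_def by auto
        show "u \<le> v - e"
        proof (rule ccontr)
          assume "\<not> u \<le> v - e"
          hence "s \<le> cdf_left F u" unfolding s_def by (intro cl_upper) simp
          then show False using uS qgt by simp
        qed
      qed
      moreover have "p j \<le> price_at F q + e/2" using A2[OF j(1)] qpos unfolding q_def by simp
      ultimately show "p j \<le> v" using e by simp
    qed
    have "real n - real n * (1 - s + e/2) - 1 \<le> real (card {j \<in> {1..n}. real n * (1 - s + e/2) < real j})"
      using e s1' by (intro card_gt_lower) auto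
    also have "\<dots> \<le> real (card {j \<in> {1..n}. p j \<le> v})"
      by (intro of_nat_mono card_mono sub) auto
    finally have c: "(real n - real n * (1 - s + e/2) - 1) / real n \<le> real (card {j \<in> {1..n}. p j \<le> v}) / real n"
      using np by (intro divide_right_mono) auto
    have "(real n - real n * (1 - s + e/2) - 1) / real n = s - e/2 - 1 / real n"
      using np by (auto simp: field_simps)
    then have "s - e/2 - 1/real n \<le> Gdec n p v" using c unfolding Gdec_def by simp
    then show ?thesis unfolding s_def using ne e by simp
  qed
  have mem: "e \<in> {e. e \<ge> 0 \<and> (\<forall>v. F (v - e) - e \<le> Gdec n p v \<and> Gdec n p v \<le> F (v + e) + e)}"
    using a b e by auto
  show ?thesis unfolding levy_dist_def
    by (rule cInf_lower[OF mem]) (rule bdd_belowI[where m=0], auto)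
qed

end


locale conc_seq =
  fixes n :: nat and r :: "nat \<Rightarrow> real"
  assumes n2: "n \<ge> 2"
  and conc: "\<And>i j k. i < j \<Longrightarrow> j < k \<Longrightarrow> k \<le> n \<Longrightarrow> real (k-j) * r i + real (j-i) * r k \<le> real (k-i) * r j"
  and rng: "\<And>k. k \<le> n \<Longrightarrow> 0 \<le> r k \<and> r k \<le> real k / real n"
begin

definition d where "d k = r (Suc k) - r k"

lemma r0: "r 0 = 0" using rng[of 0] by simp

lemma r_le1: assumes "k \<le> n" shows "r k \<le> 1"
proof -
  have "real k / real n \<le> 1" using assms n2 by (intro divide_le_eq_1_pos[THEN iffD2]) auto
  then show ?thesis using rng[OF assms] by linarith
qed

lemma d_step: "Suc k < n \<Longrightarrow> d (Suc k) \<le> d k"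
  using conc[of k "Suc k" "Suc (Suc k)"] unfolding d_def by (simp add: numeral_2_eq_2)

lemma d_anti: "a \<le> b \<Longrightarrow> b < n \<Longrightarrow> d b \<le> d a"
proof (induction b)
  case 0 then show ?case by simp
next
  case (Suc b)
  show ?case
  proof (cases "a = Suc b")
    case True then show ?thesis by simp
  next
    case False
    then have "a \<le> b" using Suc.prems by simp
    then show ?thesis using Suc d_step[of b] by force
  qed
qed

lemma d_le: assumes "k < n" shows "d k \<le> 1 / real n"
proof (cases "k = 0")
  case True
  then show ?thesis using rng[of 1] r0 n2 unfolding d_def by simp
next
  case False
  have "real (Suc k - k) * r 0 + real (k - 0) * r (Suc k) \<le> real (Suc k - 0) * r k"
    using conc[of 0 k "Suc k"] False assms by simp
  hence "real k * d k \<le> r k" using r0 unfolding d_def by (simp add: algebra_simps)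
  also have "\<dots> \<le> real k / real n" using rng[of k] assms by simp
  finally have "real k * d k \<le> real k * (1 / real n)" by simp
  then show ?thesis using False by (subst (asm) mult_le_cancel_left_pos) auto
qed

lemma d_ge: assumes "k < n" shows "d k \<ge> -1"
proof -
  have "0 \<le> r (Suc k)" using rng[of "Suc k"] assms by simp
  moreover have "r k \<le> 1" using r_le1[of k] assms by simp
  ultimately show ?thesis unfolding d_def by simp
qed

lemma d_ge2: assumes "Suc k < n" shows "real (n - Suc k) * d k \<ge> -1"
proof -
  have "real (n - Suc k) * r k + real (Suc k - k) * r n \<le> real (n - k) * r (Suc k)"
    using conc[of k "Suc k" n] assms by simp
  moreover have "real (n - k) = real (n - Suc k) + 1" using assms by simp
  moreover have "0 \<le> r n" "r (Suc k) \<le> 1" using rng[of n] r_le1[of "Suc k"] assms by auto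
  ultimately have "real (n - Suc k) * (r k - r (Suc k)) \<le> 1"
    by (simp add: algebra_simps)
  then show ?thesis unfolding d_def by (simp add: algebra_simps)
qed

lemma tele: "a \<le> j \<Longrightarrow> r j - r a = (\<Sum>k\<in>{a..<j}. d k)"
  unfolding d_def by (simp add: sum_Suc_diff')

lemma chord:
  assumes "a < j" "j < b" "b \<le> n"
  shows "0 \<le> real (b-a) * r j - real (b-j) * r a - real (j-a) * r b"
    and "real (b-a) * r j - real (b-j) * r a - real (j-a) * r b \<le> real (j-a) * real (b-j) * (d a - d (b-1))"
proof -
  show "0 \<le> real (b-a) * r j - real (b-j) * r a - real (j-a) * r b"
    using conc[OF assms] by simp
  have s1: "r j - r a \<le> real (j-a) * d a"
  proof -
    have "(\<Sum>k\<in>{a..<j}. d k) \<le> real (card {a..<j}) * d a"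
      by (rule sum_bounded_above) (use assms in \<open>auto intro: d_anti\<close>)
    then show ?thesis using tele[of a j] assms by simp
  qed
  have s2: "r b - r j \<ge> real (b-j) * d (b-1)"
  proof -
    have "(\<Sum>k\<in>{j..<b}. d k) \<ge> real (card {j..<b}) * d (b-1)"
      by (rule sum_bounded_below) (use assms in \<open>auto intro: d_anti\<close>)
    then show ?thesis using tele[of j b] assms by simp
  qed
  have eq: "real (b-a) * r j - real (b-j) * r a - real (j-a) * r b = real (b-j) * (r j - r a) - real (j-a) * (r b - r j)"
    using assms by (simp add: of_nat_diff algebra_simps)
  have "real (b-j) * (r j - r a) \<le> real (b-j) * (real (j-a) * d a)" using s1 by (intro mult_left_mono) auto
  moreover have "real (j-a) * (r b - r j) \<ge> real (j-a) * (real (b-j) * d (b-1))" using s2 by (intro mult_left_mono) auto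
  ultimately show "real (b-a) * r j - real (b-j) * r a - real (j-a) * r b \<le> real (j-a) * real (b-j) * (d a - d (b-1))"
    unfolding eq by (simp add: algebra_simps)
qed

end


lemma geo:
  fixes th :: real and T n a b :: nat and X :: "nat set"
  assumes th: "0 < th" "th \<le> 1/4" and pw: "real n \<le> (1+th)^T"
    and sub: "\<And>t. t \<le> T \<Longrightarrow> nat \<lfloor>(1+th)^t\<rfloor> \<le> n \<Longrightarrow> nat \<lfloor>(1+th)^t\<rfloor> \<in> X"
    and ab: "a < b" and bn: "b \<le> n" and gap: "\<And>x. x \<in> X \<Longrightarrow> \<not> (a < x \<and> x < b)"
  shows "b - a \<le> 1 \<or> real (b-a) < 4*th*a"
proof (rule ccontr)
  assume H: "\<not> (b - a \<le> 1 \<or> real (b-a) < 4*th*a)"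
  then have ba2: "b \<ge> a + 2" by auto
  show False
  proof (cases "a = 0")
    case True
    have "nat \<lfloor>(1+th)^0\<rfloor> \<in> X" using sub[of 0] ba2 bn by simp
    then show False using gap[of 1] True ba2 by simp
  next
    case False
    define A where "A = {t \<in> {..T}. (1+th)^t < real a + 1}"
    have A0: "0 \<in> A" unfolding A_def using False by simp
    have finA: "finite A" unfolding A_def by simp
    define t0 where "t0 = Max A"
    have t0A: "t0 \<in> A" unfolding t0_def using A0 finA Max_in by blast
    have TA: "T \<notin> A" unfolding A_def using pw bn ba2 by auto
    have t0T: "t0 < T" using t0A TA unfolding A_def by (cases "t0 = T") auto
    have "Suc t0 \<notin> A" using Max_ge[OF finA, of "Suc t0"] unfolding t0_def[symmetric] by auto
    hence c1: "(1+th)^(Suc t0) \<ge> real a + 1" unfolding A_def using t0T by auto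
    have c0: "(1+th)^t0 < real a + 1" using t0A unfolding A_def by auto
    define c where "c = nat \<lfloor>(1+th)^(Suc t0)\<rfloor>"
    have "Suc a \<le> c" unfolding c_def by (rule le_nat_floor) (use c1 in simp)
    hence ca: "c > a" by simp
    have cb: "c \<ge> b"
    proof (cases "c \<le> n")
      case True
      then have "c \<in> X" unfolding c_def using sub[of "Suc t0"] t0T by auto
      then show ?thesis using gap[of c] ca by auto
    next
      case False then show ?thesis using bn by simp
    qed
    have "real c \<le> (1+th)^(Suc t0)" unfolding c_def using th by simp
    also have "\<dots> = (1+th) * (1+th)^t0" by simp
    also have "\<dots> \<le> (1+th) * (real a + 1)" using c0 th by (intro mult_left_mono) auto
    finally have "real b \<le> (1+th) * (real a + 1)" using cb by linarith
    hence bb: "real b \<le> real a + 1 + th * real a + th" by (simp add: algebra_simps)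
    have "real (b - a) = real b - real a" using ab by simp
    then have "real (b-a) \<ge> 4*th*real a" using H by auto
    moreover have "real (b - a) \<ge> 2" using ba2 by simp
    moreover have "th * real a \<ge> th" using False th by simp
    ultimately show False using bb \<open>real (b - a) = real b - real a\<close> th by linarith
  qed
qed

locale knots = conc_seq +
  fixes th :: real and T :: nat
  assumes th: "0 < th" "th \<le> 1/4" and pw: "real n \<le> (1+th)^T"
begin

definition "Gb = (\<lambda>t. nat \<lfloor>(1+th)^t\<rfloor>) ` {..T} \<inter> {..n}"
definition "Gt = (\<lambda>x. n - x) ` Gb"
definition "sg k = real n * d k"
definition "cls k = \<lfloor>- ln (2 - sg k) / th\<rfloor>"
definition "Ch = {k \<in> {1..n-1}. cls k \<noteq> cls (k-1)}"
definition "KK = {0, n} \<union> Gb \<union> Gt \<union> Ch"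

lemma KK_sub: "KK \<subseteq> {..n}"
proof -
  have "Gb \<subseteq> {..n}" unfolding Gb_def by blast
  moreover have "Gt \<subseteq> {..n}" unfolding Gt_def by auto
  moreover have "Ch \<subseteq> {..n}" unfolding Ch_def by auto
  ultimately show ?thesis unfolding KK_def by auto
qed
lemma KK_fin: "finite KK" using KK_sub finite_subset by blast
lemma KK_0: "0 \<in> KK" and KK_n: "n \<in> KK" unfolding KK_def by auto

lemma gap_bot:
  assumes ab: "a < b" "b \<le> n" and gap: "\<And>x. x \<in> KK \<Longrightarrow> \<not> (a < x \<and> x < b)"
  shows "b - a \<le> 1 \<or> real (b-a) < 4*th*a"
proof (rule geo[OF th pw _ ab gap, where X=KK])
  fix t assume "t \<le> T" "nat \<lfloor>(1+th)^t\<rfloor> \<le> n"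
  then have "nat \<lfloor>(1+th)^t\<rfloor> \<in> Gb" unfolding Gb_def by blast
  then show "nat \<lfloor>(1+th)^t\<rfloor> \<in> KK" unfolding KK_def by blast
qed

lemma gap_top:
  assumes ab: "a < b" "b \<le> n" and gap: "\<And>x. x \<in> KK \<Longrightarrow> \<not> (a < x \<and> x < b)"
  shows "b - a \<le> 1 \<or> real (b-a) < 4*th*(n-b)"
proof -
  have "(n - a) - (n - b) \<le> 1 \<or> real ((n - a) - (n - b)) < 4*th*(n-b)"
  proof (rule geo[OF th pw, where X="(\<lambda>x. n - x) ` KK"])
    fix t assume t: "t \<le> T" "nat \<lfloor>(1+th)^t\<rfloor> \<le> n"
    then have "nat \<lfloor>(1+th)^t\<rfloor> \<in> Gb" unfolding Gb_def by blast
    then have "n - nat \<lfloor>(1+th)^t\<rfloor> \<in> Gt" unfolding Gt_def by blast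
    then have "n - nat \<lfloor>(1+th)^t\<rfloor> \<in> KK" unfolding KK_def by blast
    then show "nat \<lfloor>(1+th)^t\<rfloor> \<in> (\<lambda>x. n - x) ` KK" using t(2)
      by (intro image_eqI[of _ _ "n - nat \<lfloor>(1+th)^t\<rfloor>"]) auto
  next
    fix x assume "x \<in> (\<lambda>x. n - x) ` KK"
    then obtain y where y: "y \<in> KK" "x = n - y" by auto
    then have "y \<le> n" using KK_sub by auto
    then show "\<not> (n - b < x \<and> x < n - a)" using gap[OF y(1)] y ab by auto
  qed (use ab in auto)
  moreover have "(n - a) - (n - b) = b - a" using ab by simp
  ultimately show ?thesis by simp
qed

lemma sg_le1: assumes "k < n" shows "sg k \<le> 1"
proof -
  have "real n * d k \<le> real n * (1 / real n)" using d_le[OF assms] by (intro mult_left_mono) auto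
  then show ?thesis using n2 unfolding sg_def by simp
qed

lemma sg_ge: assumes "k < n" shows "sg k \<ge> - real n"
proof -
  have "real n * (-1) \<le> real n * d k" using d_ge[OF assms] by (intro mult_left_mono) auto
  then show ?thesis unfolding sg_def by simp
qed

lemma sg_anti: "a \<le> b \<Longrightarrow> b < n \<Longrightarrow> sg b \<le> sg a"
  using d_anti unfolding sg_def by (simp add: mult_left_mono)

lemma cls_anti: "a \<le> b \<Longrightarrow> b < n \<Longrightarrow> cls b \<le> cls a"
proof -
  assume ab: "a \<le> b" "b < n"
  have "2 - sg a \<le> 2 - sg b" using sg_anti[OF ab] by simp
  moreover have "0 < 2 - sg a" using sg_le1[of a] ab by simp
  ultimately have "ln (2 - sg a) \<le> ln (2 - sg b)" by (rule ln_mono)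
  then have "- ln (2 - sg b) / th \<le> - ln (2 - sg a) / th" using th by (simp add: divide_right_mono)
  then show "cls b \<le> cls a" unfolding cls_def by (rule floor_mono)
qed

lemma cls_const:
  assumes ab: "a < b" "b < n" and gap: "\<And>x. x \<in> KK \<Longrightarrow> \<not> (a < x \<and> x < b)"
  shows "cls (b-1) = cls a"
proof -
  have "\<forall>c. a \<le> c \<and> c \<le> b - 1 \<longrightarrow> cls c = cls a"
  proof (intro allI)
    fix c show "a \<le> c \<and> c \<le> b - 1 \<longrightarrow> cls c = cls a"
    proof (induction c)
      case 0 then show ?case by auto
    next
      case (Suc c)
      show ?case
      proof
        assume h: "a \<le> Suc c \<and> Suc c \<le> b - 1"
        show "cls (Suc c) = cls a"
        proof (cases "a = Suc c")
          case True then show ?thesis by simp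
        next
          case False
          then have "a < Suc c" "Suc c < b" using h ab by auto
          then have "Suc c \<notin> KK" using gap[of "Suc c"] by blast
          then have nC: "Suc c \<notin> Ch" unfolding KK_def by blast
          have "Suc c \<le> n - 1" using h ab by arith
          then have inr: "Suc c \<in> {1..n-1}" by simp
          have "cls (Suc c) = cls c" using nC inr unfolding Ch_def by simp
          moreover have "cls c = cls a" using Suc.IH h False by simp
          ultimately show ?thesis by simp
        qed
      qed
    qed
  qed
  moreover have "a \<le> b - 1 \<and> b - 1 \<le> b - 1" using ab by arith
  ultimately show ?thesis by blast
qed

lemma slope_bound:
  assumes ac: "a \<le> c" "c < n" and eq: "cls a = cls c"
  shows "sg a - sg c \<le> 2 * th * (2 - sg c)"
proof -
  have pa: "0 < 2 - sg a" and pc: "0 < 2 - sg c" using sg_le1[of a] sg_le1[of c] ac by auto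
  have sgac: "sg c \<le> sg a" by (rule sg_anti[OF ac])
  define x where "x = - ln (2 - sg a) / th"
  define y where "y = - ln (2 - sg c) / th"
  have "of_int \<lfloor>x\<rfloor> \<le> x" "x < of_int \<lfloor>x\<rfloor> + 1" "of_int \<lfloor>y\<rfloor> \<le> y" "y < of_int \<lfloor>y\<rfloor> + 1"
    by (simp_all add: of_int_floor_le real_of_int_floor_add_one_gt)
  moreover have "\<lfloor>x\<rfloor> = \<lfloor>y\<rfloor>" using eq unfolding cls_def x_def y_def .
  ultimately have "x - y < 1" by linarith
  also have "x - y = (ln (2 - sg c) - ln (2 - sg a)) / th" unfolding x_def y_def by (simp add: diff_divide_distrib)
  finally have lt: "ln (2 - sg c) - ln (2 - sg a) < th" using th by (simp add: pos_divide_less_eq)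
  have "2 - sg c = exp (ln (2 - sg c))" using pc by simp
  also have "\<dots> < exp (th + ln (2 - sg a))" using lt by simp
  also have "\<dots> = exp th * (2 - sg a)" using pa by (simp add: exp_add)
  also have "\<dots> \<le> (1 + 2 * th) * (2 - sg a)"
  proof -
    have "exp th \<le> 1 + 2 * th" using exp_bound_lemma[of th] th by simp
    then show ?thesis using pa by (intro mult_right_mono) auto
  qed
  finally have "2 - sg c < (1 + 2*th) * (2 - sg a)" .
  then have "sg a - sg c < 2 * th * (2 - sg a)" by (simp add: algebra_simps)
  also have "\<dots> \<le> 2 * th * (2 - sg c)" using sgac th by simp
  finally show ?thesis by simp
qed

lemma card_Ch: "real (card Ch) \<le> ln (real n + 2) / th + 2"
proof -
  define lo where "lo = \<lfloor>- ln (real n + 2) / th\<rfloor>"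
  have chlt: "cls k < cls (k-1)" "1 \<le> k" "k < n" if k: "k \<in> Ch" for k
  proof -
    have k1: "1 \<le> k" "k \<le> n - 1" "cls k \<noteq> cls (k-1)" using k unfolding Ch_def by auto
    then show "k < n" "1 \<le> k" using n2 by arith+
    have "cls k \<le> cls (k-1)" by (rule cls_anti) (use k1 \<open>k < n\<close> in arith)+
    then show "cls k < cls (k-1)" using k1 by simp
  qed
  have inj: "inj_on cls Ch"
  proof (rule inj_onI)
    fix x y assume x: "x \<in> Ch" and y: "y \<in> Ch" and e: "cls x = cls y"
    have key: False if "u \<in> Ch" "v \<in> Ch" "u < v" "cls u = cls v" for u v
    proof -
      have "cls (v-1) \<le> cls u" by (rule cls_anti) (use that chlt[OF that(2)] in arith)+
      then show False using chlt(1)[OF that(2)] that(4) by simp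
    qed
    show "x = y"
    proof (rule ccontr)
      assume "x \<noteq> y"
      then consider "x < y" | "y < x" by linarith
      then show False using key x y e by metis
    qed
  qed
  have img: "cls ` Ch \<subseteq> {lo..0}"
  proof
    fix z assume "z \<in> cls ` Ch"
    then obtain k where k: "k \<in> Ch" "z = cls k" by auto
    have kn: "k < n" using chlt(3)[OF k(1)] .
    have p1: "1 \<le> 2 - sg k" using sg_le1[OF kn] by simp
    have p2: "2 - sg k \<le> real n + 2" using sg_ge[OF kn] by simp
    have "0 \<le> ln (2 - sg k)" using p1 by simp
    then have "- ln (2 - sg k) / th \<le> 0" using th by (simp add: divide_nonpos_pos)
    then have "cls k \<le> 0" unfolding cls_def by linarith
    moreover have "ln (2 - sg k) \<le> ln (real n + 2)" using p1 p2 by simp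
    then have "- ln (real n + 2) / th \<le> - ln (2 - sg k) / th" using th by (simp add: divide_right_mono)
    then have "lo \<le> cls k" unfolding lo_def cls_def by (rule floor_mono)
    ultimately show "z \<in> {lo..0}" using k by auto
  qed
  have "card Ch = card (cls ` Ch)" using inj by (simp add: card_image)
  also have "\<dots> \<le> card {lo..0}" by (rule card_mono[OF _ img]) simp
  finally have "real (card Ch) \<le> real (card {lo..0})" by simp
  also have "\<dots> = real_of_int (1 - lo)"
  proof -
    have "0 \<le> ln (real n + 2)" by simp
    then have "- ln (real n + 2) / th \<le> 0" using th by (simp add: divide_nonpos_pos)
    then have "lo \<le> 0" unfolding lo_def by linarith
    then show ?thesis by simp
  qed
  also have "\<dots> \<le> ln (real n + 2) / th + 2" unfolding lo_def by linarith
  finally show ?thesis .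
qed

end


definition lo :: "nat set \<Rightarrow> nat \<Rightarrow> nat" where "lo K j = Max {k\<in>K. k \<le> j}"
definition hi :: "nat set \<Rightarrow> nat \<Rightarrow> nat" where "hi K j = Min {k\<in>K. j \<le> k}"
definition interp :: "nat set \<Rightarrow> (nat \<Rightarrow> real) \<Rightarrow> nat \<Rightarrow> real" where
  "interp K w j = (if lo K j = hi K j then w (lo K j)
     else (real (hi K j - j) * w (lo K j) + real (j - lo K j) * w (hi K j)) / real (hi K j - lo K j))"

lemma lohi:
  assumes fin: "finite K" and K0: "0 \<in> K" and Kn: "n \<in> K" and jn: "j \<le> n"
  shows "lo K j \<in> K" "hi K j \<in> K" "lo K j \<le> j" "j \<le> hi K j"
    "\<And>x. x \<in> K \<Longrightarrow> \<not> (lo K j < x \<and> x < hi K j)"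
    "j \<in> K \<Longrightarrow> lo K j = j \<and> hi K j = j"
proof -
  have f1: "finite {k\<in>K. k \<le> j}" and ne1: "{k\<in>K. k \<le> j} \<noteq> {}" using fin K0 by auto
  have f2: "finite {k\<in>K. j \<le> k}" and ne2: "{k\<in>K. j \<le> k} \<noteq> {}" using fin Kn jn by auto
  have l: "lo K j \<in> {k\<in>K. k \<le> j}" unfolding lo_def using Max_in[OF f1 ne1] .
  have h: "hi K j \<in> {k\<in>K. j \<le> k}" unfolding hi_def using Min_in[OF f2 ne2] .
  show "lo K j \<in> K" "hi K j \<in> K" "lo K j \<le> j" "j \<le> hi K j" using l h by auto
  show "\<not> (lo K j < x \<and> x < hi K j)" if x: "x \<in> K" for x
  proof (cases "x \<le> j")
    case True
    then have "x \<le> lo K j" unfolding lo_def using x f1 by (intro Max_ge) auto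
    then show ?thesis by simp
  next
    case False
    then have "hi K j \<le> x" unfolding hi_def using x f2 by (intro Min_le) auto
    then show ?thesis by simp
  qed
  show "lo K j = j \<and> hi K j = j" if "j \<in> K"
  proof
    have "j \<le> lo K j" unfolding lo_def using that f1 by (intro Max_ge) auto
    then show "lo K j = j" using l by simp
    have "hi K j \<le> j" unfolding hi_def using that f2 by (intro Min_le) auto
    then show "hi K j = j" using h by simp
  qed
qed

lemma aux1: "(c::real) \<noteq> 0 \<Longrightarrow> y - (p + q)/c = (c*y - p - q)/c"
  by (simp add: field_simps)
lemma aux2: "(c::real) \<noteq> 0 \<Longrightarrow> (u*w1 + v * w2)/c - (u*r1 + v * r2)/c = (u*(w1 - r1) + v * (w2 - r2))/c"
  by (simp add: diff_divide_distrib[symmetric] algebra_simps)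

context knots begin

lemma interp_err:
  fixes rho :: real
  assumes w: "\<And>k. k \<le> n \<Longrightarrow> r k - rho \<le> w k \<and> w k \<le> r k"
    and j: "j \<le> n" "1 \<le> j" and rho: "rho \<ge> 0"
  shows "\<bar>interp KK w j - r j\<bar> \<le> 96 * th^2 * (real j / real n) + rho"
proof -
  note LH = lohi[OF KK_fin KK_0 KK_n j(1)]
  define a where "a = lo KK j"
  define b where "b = hi KK j"
  have aK: "a \<le> j" "j \<le> b" "a \<le> n" "b \<le> n" using LH KK_sub unfolding a_def b_def by auto
  have gap: "\<And>x. x \<in> KK \<Longrightarrow> \<not> (a < x \<and> x < b)" using LH(5) unfolding a_def b_def by blast
  have nonneg: "0 \<le> 96 * th^2 * (real j / real n)" by simp
  show ?thesis
  proof (cases "a = b")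
    case True
    then have "a = j" using aK by simp
    then have "interp KK w j = w j" using True unfolding interp_def a_def b_def by simp
    then show ?thesis using w[OF j(1)] nonneg unfolding abs_le_iff by linarith
  next
    case False
    then have ab: "a < b" using aK by simp
    have iv: "interp KK w j = (real (b - j) * w a + real (j - a) * w b) / real (b - a)"
      unfolding interp_def a_def[symmetric] b_def[symmetric] using False by simp
    show ?thesis
    proof (cases "j = a \<or> j = b")
      case True
      have "interp KK w j = w j"
      proof (cases "j = a")
        case True
        then show ?thesis using iv ab by simp
      next
        case False
        then have "j = b" using \<open>j = a \<or> j = b\<close> by simp
        then show ?thesis using iv ab by simp
      qed
      then show ?thesis using w[OF j(1)] nonneg unfolding abs_le_iff by linarith
    next
      case False
      then have ajb: "a < j" "j < b" using aK by auto
      define A where "A = real a"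
      define B where "B = real b"
      define J where "J = real j"
      define N where "N = real n"
      have ba: "real (b - a) = B - A" "real (b - j) = B - J" "real (j - a) = J - A"
        using ajb unfolding A_def B_def J_def by auto
      have AJB: "A < J" "J < B" "B \<le> N" using ajb aK unfolding A_def B_def J_def N_def by auto
      have ba2: "B - A \<ge> 2" using ajb unfolding A_def B_def by linarith
      have "b - a \<le> 1 \<or> real (b-a) < 4*th*(n-b)" by (rule gap_top[OF ab aK(4) gap])
      then have top: "B - A < 4*th*(N - B)" using ajb aK ba unfolding N_def B_def by auto
      have bn: "b < n"
      proof (rule ccontr)
        assume "\<not> b < n" then have "N = B" using aK unfolding N_def B_def by simp
        then show False using top ba2 by simp
      qed
      have NB: "N - B > 0" using bn unfolding N_def B_def by simp
      have "b - a \<le> 1 \<or> real (b-a) < 4*th*a" by (rule gap_bot[OF ab aK(4) gap])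
      then have bot: "B - A < 4*th*A" using ajb ba unfolding A_def by auto
      have "cls (b-1) = cls a" by (rule cls_const[OF ab bn gap])
      then have sl: "sg a - sg (b-1) \<le> 2 * th * (2 - sg (b-1))"
        using slope_bound[of a "b-1"] ab bn by simp
      have "real (n - Suc (b-1)) * d (b-1) \<ge> -1" using d_ge2[of "b-1"] ab bn by simp
      then have dg: "(N - B) * d (b-1) \<ge> -1" using ab bn unfolding N_def B_def by (simp add: of_nat_diff)
      define Z where "Z = 2 - sg (b-1)"
      have "b - 1 < n" using bn by simp
      then have Zpos: "Z > 0" unfolding Z_def using sg_le1[of "b-1"] by simp
      have NZ: "(N - B) * Z \<le> 2 * (N - B) + N"
      proof -
        have "(N - B) * sg (b-1) = N * ((N - B) * d (b-1))" unfolding sg_def N_def by (simp add: algebra_simps)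
        also have "\<dots> \<ge> N * (-1)" using dg unfolding N_def by (intro mult_left_mono) auto
        finally show ?thesis unfolding Z_def by (simp add: algebra_simps)
      qed
      have Npos: "N > 0" using n2 unfolding N_def by simp
      define D where "D = d a - d (b-1)"
      have D0: "D \<ge> 0" unfolding D_def using d_anti[of a "b-1"] ab bn by simp
      have DN: "D * N \<le> 2 * th * Z"
        using sl unfolding D_def sg_def Z_def N_def by (simp add: algebra_simps)
      have chd: "0 \<le> real (b-a) * r j - real (b-j) * r a - real (j-a) * r b"
        "real (b-a) * r j - real (b-j) * r a - real (j-a) * r b \<le> real (j-a) * real (b-j) * (d a - d (b-1))"
        using chord[OF ajb aK(4)] by auto
      define X where "X = real (b-a) * r j - real (b-j) * r a - real (j-a) * r b"
      have X0: "0 \<le> X" and X1: "X \<le> (J - A) * (B - J) * D" using chd unfolding X_def D_def ba by auto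
      have XE: "X \<le> (B - A) * ((B - A) * D)"
      proof -
        have "(J - A) * (B - J) \<le> (B - A) * (B - A)" using AJB by (intro mult_mono) auto
        then have "(J - A) * (B - J) * D \<le> (B - A) * (B - A) * D" using D0 by (intro mult_right_mono) auto
        then show ?thesis using X1 by (simp add: algebra_simps)
      qed
      have E: "(B - A) * D \<le> 96 * th^2 * (J / N)"
      proof (cases "2 * B \<le> N")
        case True
        have "(N - B) * Z \<le> (N - B) * 4" using NZ True by simp
        then have Z4: "Z \<le> 4" using mult_le_cancel_left_pos[OF NB, of Z 4] by blast
        have "(B - A) * D * N \<le> (B - A) * (2 * th * Z)" using DN ba2 by (simp add: mult.assoc mult_left_mono)
        also have "\<dots> \<le> (B - A) * (2 * th * 4)" using Z4 ba2 th by (intro mult_left_mono) auto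
        also have "\<dots> = 8 * th * (B - A)" by simp
        also have "\<dots> \<le> 8 * th * (4 * th * A)" using bot th by (intro mult_left_mono) auto
        also have "\<dots> = 32 * th^2 * A" by (simp add: power2_eq_square)
        also have "\<dots> \<le> 32 * th^2 * J" using AJB by (intro mult_left_mono) auto
        also have "\<dots> \<le> 96 * th^2 * J" using AJB unfolding A_def by simp
        finally have "(B - A) * D * N \<le> 96 * th^2 * J" .
        then show ?thesis using Npos by (simp add: pos_le_divide_eq)
      next
        case False
        have "(B - A) * Z * (N - B) \<le> (B - A) * (2 * (N - B) + N)"
          using NZ ba2 by (simp add: mult.commute mult.left_commute mult_left_mono)
        also have "\<dots> = 2 * (B - A) * (N - B) + N * (B - A)" by (simp add: algebra_simps)
        also have "\<dots> \<le> 2 * (B - A) * (N - B) + N * (4*th*(N - B))" using top Npos by (intro add_left_mono mult_left_mono) auto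
        also have "\<dots> = (2 * (B - A) + 4 * th * N) * (N - B)" by (simp add: algebra_simps)
        finally have "(N - B) * ((B - A) * Z) \<le> (N - B) * (2 * (B - A) + 4 * th * N)" by (simp add: algebra_simps)
        then have "(B - A) * Z \<le> 2 * (B - A) + 4 * th * N" using mult_le_cancel_left_pos[OF NB] by blast
        also have "\<dots> \<le> 8 * th * N + 4 * th * N"
        proof -
          have "A \<le> N" using AJB by simp
          then have "4*th*A \<le> 4*th*N" using th by (intro mult_left_mono) auto
          then have h2: "2*(4*th*A) \<le> 2*(4*th*N)" by simp
          have h1: "2*(B-A) \<le> 2*(4*th*A)" using bot by simp
          have "2 * (B - A) \<le> 2*(4*th*N)" using order.trans[OF h1 h2] .
          then show ?thesis by (simp add: mult.commute)
        qed
        finally have BZ: "(B - A) * Z \<le> 12 * th * N" by (simp add: ac_simps)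
        have "(B - A) * D * N \<le> (B - A) * (2 * th * Z)" using DN ba2 by (simp add: mult.assoc mult_left_mono)
        also have "\<dots> = 2 * th * ((B - A) * Z)" by simp
        also have "\<dots> \<le> 2 * th * (12 * th * N)" using BZ th by (intro mult_left_mono) auto
        also have "\<dots> = 24 * th^2 * N" by (simp add: power2_eq_square)
        also have "\<dots> \<le> 96 * th^2 * J"
        proof -
          have "4 * th * A \<le> A" using th unfolding A_def by (intro mult_left_le_one_le) auto
          then have "B < 2 * A" using bot by simp
          then have "N < 4 * J" using False AJB by simp
          then have "th^2 * N \<le> th^2 * (4 * J)" by (intro mult_left_mono) auto
          then show ?thesis by (simp add: ac_simps)
        qed
        finally have "(B - A) * D * N \<le> 96 * th^2 * J" .
        then show ?thesis using Npos by (simp add: pos_le_divide_eq)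
      qed
      define C where "C = (real (b-j) * r a + real (j-a) * r b) / real (b-a)"
      have rj: "r j - C = X / (B - A)"
        using ba2 unfolding X_def ba C_def by (intro aux1) simp
      have iw: "interp KK w j - C
          = (real (b-j) * (w a - r a) + real (j-a) * (w b - r b)) / (B - A)"
        unfolding iv ba C_def using ba2 by (intro aux2) simp
      have wa: "r a - rho \<le> w a" "w a \<le> r a" "r b - rho \<le> w b" "w b \<le> r b" using w aK by auto
      have "real (b-j) * (w a - r a) + real (j-a) * (w b - r b) \<le> 0"
        using wa by (simp add: mult_nonneg_nonpos add_nonpos_nonpos)
      then have up: "interp KK w j - C \<le> 0"
        unfolding iw using ba2 by (simp add: divide_nonpos_pos)
      have "real (b-j) * (w a - r a) + real (j-a) * (w b - r b) \<ge> real (b-j) * (-rho) + real (j-a) * (-rho)"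
        using wa by (intro add_mono mult_left_mono) auto
      also have "real (b-j) * (-rho) + real (j-a) * (-rho) = - rho * (B - A)" unfolding ba by (simp add: algebra_simps)
      finally have "interp KK w j - C \<ge> - rho"
        unfolding iw using ba2 by (simp add: le_divide_eq)
      moreover have "X / (B - A) \<le> (B - A) * D" using XE ba2 by (simp add: divide_le_eq mult.commute)
      moreover have "0 \<le> X / (B - A)" using X0 ba2 by simp
      ultimately have facts: "- rho \<le> interp KK w j - C"
        "X / (B - A) \<le> (B - A) * D" "0 \<le> X / (B - A)" by auto
      have g1: "interp KK w j - r j \<le> 96 * th^2 * (real j / real n) + rho"
        using facts up rj E rho nonneg unfolding J_def N_def by linarith
      have g2: "- (interp KK w j - r j) \<le> 96 * th^2 * (real j / real n) + rho"
        using facts up rj E rho nonneg unfolding J_def N_def by linarith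
      show ?thesis unfolding abs_le_iff using g1 g2 by blast
    qed
  qed
qed

end


definition "nn e = nat \<lceil>4/e\<rceil>"
definition "thh e = sqrt e / 20"
definition "TTe e = nat \<lceil>2 * ln (real (nn e) + 1) / thh e\<rceil>"
definition "rh e = (e::real)^2/8"
definition "VV e = nat \<lceil>8 / (e::real)^2\<rceil>"
definition "Kof S = fst ` S"
definition "wof e S k = rh e * real (Max (snd ` {x \<in> S. fst x = k}))"
definition "pdec e S j = (if real j / real (nn e) < e/2 then 1 else if real j / real (nn e) > 1 - e/2 then 0
     else interp (Kof S) (wof e S) j / (real j / real (nn e)))"
definition "Gcode e S = Gdec (nn e) (pdec e S)"

lemma params:
  assumes e: "0 < e" "e \<le> 1"
  shows "nn e \<ge> 2" "1 / real (nn e) \<le> e/4" "0 < thh e" "thh e \<le> 1/4"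
    "real (nn e) \<le> (1 + thh e)^(TTe e)" "real (nn e) \<le> 4/e + 1" "96 * (thh e)^2 = (6/25) * e"
proof -
  have "4/e \<ge> 4" using e by (simp add: field_simps)
  then show n2: "nn e \<ge> 2" unfolding nn_def by linarith
  have "real (nn e) \<ge> 4/e" unfolding nn_def by linarith
  moreover have "real (nn e) > 0" using n2 by simp
  ultimately show "1 / real (nn e) \<le> e/4" using e by (simp add: field_simps)
  show "real (nn e) \<le> 4/e + 1" unfolding nn_def using e by (simp add: of_nat_nat)
  show th0: "0 < thh e" unfolding thh_def using e by simp
  have "sqrt e \<le> 1" using e by simp
  then show th1: "thh e \<le> 1/4" unfolding thh_def by linarith
  show "96 * (thh e)^2 = (6/25) * e" unfolding thh_def using e by (simp add: power_divide)
  define th where "th = thh e"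
  define T where "T = TTe e"
  have "ln (1 + th) \<ge> th - th^2" unfolding th_def using th0 th1 by (intro ln_one_plus_pos_lower_bound) auto
  moreover have "th^2 \<le> th/2" unfolding th_def using th0 th1 by (simp add: power2_eq_square)
  ultimately have l1: "ln (1 + th) \<ge> th/2" by simp
  have "real T \<ge> 2 * ln (real (nn e) + 1) / th" unfolding T_def TTe_def th_def by linarith
  then have "real T * (th/2) \<ge> ln (real (nn e) + 1)" using th0 unfolding th_def[symmetric] by (simp add: field_simps)
  moreover have "real T * ln (1 + th) \<ge> real T * (th/2)" using l1 by (intro mult_left_mono) auto
  ultimately have "ln ((1 + th)^T) \<ge> ln (real (nn e) + 1)" using th0 unfolding th_def[symmetric]
    by (simp add: ln_realpow)
  then have "(1 + th)^T \<ge> real (nn e) + 1" using th0 unfolding th_def[symmetric]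
    by (subst (asm) ln_le_cancel_iff) auto
  then show "real (nn e) \<le> (1 + thh e)^(TTe e)" unfolding th_def T_def by simp
qed

lemma interp_cong:
  assumes fin: "finite K" and K0: "0 \<in> K" and Kn: "n \<in> K" and jn: "j \<le> n"
    and agree: "\<And>k. k \<in> K \<Longrightarrow> w k = w' k"
  shows "interp K w j = interp K w' j"
  using lohi[OF fin K0 Kn jn] agree unfolding interp_def by simp

context cdf01 begin

lemma approx_exists:
  assumes reg: "myerson_regular F" and e: "0 < e" "e \<le> 1"
  shows "\<exists>S. S \<subseteq> {..nn e} \<times> {..VV e} \<and> S \<noteq> {} \<and>
     real (card S) \<le> 6 + 2 * real (TTe e) + ln (real (nn e) + 2) / thh e \<and> levy_dist F (Gcode e S) \<le> e"
proof -
  note pr = params[OF e]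
  define n where "n = nn e"
  define th where "th = thh e"
  define T where "T = TTe e"
  define rho where "rho = rh e"
  define r where "r k = R (real k / real n)" for k
  have n2: "n \<ge> 2" using pr unfolding n_def by simp
  have npos: "real n > 0" using n2 by simp
  have rho0: "rho > 0" unfolding rho_def rh_def using e by simp
  have cs: "conc_seq n r"
  proof
    show "2 \<le> n" by (rule n2)
    fix i j k :: nat assume ijk: "i < j" "j < k" "k \<le> n"
    have tp: "(real k / n - real j / n) * R (real i / n) + (real j / n - real i / n) * R (real k / n)
        \<le> (real k / n - real i / n) * R (real j / n)"
      using ijk npos by (intro three_point[OF reg]) (auto simp: divide_le_eq_1 divide_strict_right_mono)
    have "real n * ((real k / n - real j / n) * R (real i / n) + (real j / n - real i / n) * R (real k / n))
        \<le> real n * ((real k / n - real i / n) * R (real j / n))"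
      using tp npos by (intro mult_left_mono) auto
    moreover have "real n * (real k / n - real j / n) = real (k - j)" "real n * (real j / n - real i / n) = real (j - i)"
      "real n * (real k / n - real i / n) = real (k - i)" using ijk npos by (auto simp: field_simps of_nat_diff)
    moreover have "\<And>a x b y :: real. real n * (a * x + b * y) = (real n * a) * x + (real n * b) * y"
      "\<And>a x :: real. real n * (a * x) = (real n * a) * x" by (simp_all add: algebra_simps)
    ultimately show "real (k - j) * r i + real (j - i) * r k \<le> real (k - i) * r j"
      unfolding r_def by metis
  next
    fix k assume k: "k \<le> n"
    have "real k / n \<in> {0..1}" using k npos by (auto simp: divide_le_eq_1)
    then show "0 \<le> r k \<and> r k \<le> real k / real n" unfolding r_def using R_range by blast
  qed
  interpret knots n r th T
    by (rule knots.intro[OF cs]) (use pr in \<open>auto simp: knots_axioms_def th_def T_def n_def\<close>)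
  define c where "c k = nat \<lfloor>r k / rho\<rfloor>" for k
  define w where "w k = rho * real (c k)" for k
  have wr: "r k - rho \<le> w k \<and> w k \<le> r k" if k: "k \<le> n" for k
  proof -
    have r0: "0 \<le> r k" using rng[OF k] by simp
    have "real (c k) = of_int \<lfloor>r k / rho\<rfloor>" unfolding c_def using r0 rho0 by simp
    moreover have "r k / rho - 1 < of_int \<lfloor>r k / rho\<rfloor>" "of_int \<lfloor>r k / rho\<rfloor> \<le> r k / rho" by linarith+
    ultimately have "r k / rho - 1 \<le> real (c k)" "real (c k) \<le> r k / rho" by auto
    then have "rho * (r k / rho - 1) \<le> rho * real (c k)" "rho * real (c k) \<le> rho * (r k / rho)"
      using rho0 by (intro mult_left_mono; simp)+
    then show ?thesis using rho0 unfolding w_def by (simp add: algebra_simps)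
  qed
  define S where "S = (\<lambda>k. (k, c k)) ` KK"
  have KS: "Kof S = KK" unfolding Kof_def S_def by force
  have wS: "wof e S k = w k" if "k \<in> KK" for k
  proof -
    have "{x \<in> S. fst x = k} = {(k, c k)}" unfolding S_def using that by auto
    then show ?thesis unfolding wof_def w_def rho_def by simp
  qed
  have Ssub: "S \<subseteq> {..nn e} \<times> {..VV e}"
  proof
    fix x assume "x \<in> S"
    then obtain k where k: "k \<in> KK" "x = (k, c k)" unfolding S_def by auto
    have kn: "k \<le> n" using k KK_sub by auto
    have "r k \<le> 1" using r_le1[OF kn] .
    then have "r k / rho \<le> 8 / e^2" using rho0 e unfolding rho_def rh_def by (simp add: field_simps)
    then have "c k \<le> VV e" unfolding c_def VV_def by (intro nat_mono) linarith
    then show "x \<in> {..nn e} \<times> {..VV e}" using k kn unfolding n_def by auto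
  qed
  have Sne: "S \<noteq> {}" unfolding S_def using KK_0 by auto
  have cGb: "card Gb \<le> T + 1"
  proof -
    have "card Gb \<le> card ((\<lambda>t. nat \<lfloor>(1+th)^t\<rfloor>) ` {..T})" unfolding Gb_def by (intro card_mono) auto
    also have "\<dots> \<le> card {..T}" by (rule card_image_le) simp
    finally show ?thesis by simp
  qed
  have fGb: "finite Gb" unfolding Gb_def by simp
  have cGt: "card Gt \<le> card Gb" unfolding Gt_def by (rule card_image_le[OF fGb])
  have c02: "card {0, n} \<le> 2" by (simp add: card_insert_le_m1)
  have fCh: "finite Ch" unfolding Ch_def by simp
  have "card KK \<le> card {0, n} + card Gb + card Gt + card Ch"
  proof -
    have "card KK \<le> card ({0, n} \<union> Gb \<union> Gt) + card Ch" unfolding KK_def by (rule card_Un_le)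
    also have "card ({0, n} \<union> Gb \<union> Gt) \<le> card ({0, n} \<union> Gb) + card Gt" by (rule card_Un_le)
    also have "card ({0, n} \<union> Gb) \<le> card {0, n} + card Gb" by (rule card_Un_le)
    finally show ?thesis by simp
  qed
  also have "card {0, n} + card Gb + card Gt + card Ch \<le> 2 + (T + 1) + (T + 1) + card Ch"
    using cGb cGt c02 by (intro add_mono) auto
  finally have "card KK \<le> 2 + 2 * (T + 1) + card Ch" by simp
  then have "real (card KK) \<le> real (2 + 2 * (T + 1) + card Ch)" by (rule of_nat_mono)
  then have "real (card KK) \<le> 2 + 2 * (real T + 1) + real (card Ch)" by simp
  then have cKK: "real (card KK) \<le> 6 + 2 * real T + ln (real n + 2) / th" using card_Ch by (smt (verit))
  have cS: "card S \<le> card KK" unfolding S_def by (rule card_image_le[OF KK_fin])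
  have mid: "\<bar>pdec e S j - price_at F (real j / real n)\<bar> \<le> e/2"
    if j: "j \<in> {1..n}" and q1: "e/2 \<le> real j / real n" and q2: "real j / real n \<le> 1 - e/2" for j
  proof -
    define q where "q = real j / real n"
    have qpos: "q > 0" using q1 e unfolding q_def by linarith
    have pd: "pdec e S j = interp KK w j / q"
      using q1 q2 unfolding pdec_def q_def n_def[symmetric] KS
      using interp_cong[OF KK_fin KK_0 KK_n, of j "wof e S" w] wS j by auto
    have rj: "r j = q * price_at F q" unfolding r_def q_def revenue_curve_def by simp
    have "\<bar>interp KK w j - r j\<bar> \<le> 96 * th^2 * q + rho"
      using interp_err[of rho w j] wr j rho0 unfolding q_def by auto
    also have "\<dots> = (6/25) * e * q + e^2/8" using pr unfolding th_def rho_def rh_def by simp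
    also have "\<dots> \<le> e / 2 * q"
    proof -
      have "e^2/8 = e/4 * (e/2)" by (simp add: power2_eq_square)
      also have "\<dots> \<le> e/4 * q" using q1 e unfolding q_def by (intro mult_left_mono) auto
      finally have h: "e^2/8 \<le> (e * q)/4" by simp
      have "0 \<le> e * q" using e qpos by simp
      then have "(6/25) * (e * q) + e^2/8 \<le> (e * q) / 2" using h by linarith
      then show ?thesis by (simp add: algebra_simps)
    qed
    finally have fin: "\<bar>interp KK w j - r j\<bar> / q \<le> e / 2" using qpos by (simp add: divide_le_eq)
    have eq: "interp KK w j / q - price_at F q = (interp KK w j - r j) / q"
      unfolding rj using qpos by (simp add: diff_divide_distrib)
    have "\<bar>pdec e S j - price_at F q\<bar> = \<bar>(interp KK w j - r j) / q\<bar>" unfolding pd eq ..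
    also have "\<dots> = \<bar>interp KK w j - r j\<bar> / q" using qpos by (simp add: abs_divide)
    finally show ?thesis using fin unfolding q_def by simp
  qed
  have lev: "levy_dist F (Gcode e S) \<le> e"
    unfolding Gcode_def n_def[symmetric]
  proof (rule levy_bound)
    show "1 \<le> n" "0 < e" using n2 e by auto
    show "1 / real n \<le> e / 4" using pr unfolding n_def by simp
  next
    fix j assume j: "j \<in> {1..n}" and h: "real j / real n + e / 2 \<le> 1"
    have qle: "real j / real n \<le> 1" using h e by simp
    show "price_at F (real j / real n + e / 2) - e / 2 \<le> pdec e S j"
    proof (cases "real j / real n < e/2")
      case True
      then have "pdec e S j = 1" unfolding pdec_def n_def by simp
      then show ?thesis using P_range[OF h] e by simp
    next
      case False
      have "price_at F (real j / real n + e / 2) \<le> price_at F (real j / real n)"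
        using P_anti[of "real j / real n" "real j / real n + e/2"] h e by simp
      moreover have "\<bar>pdec e S j - price_at F (real j / real n)\<bar> \<le> e/2"
        using mid[OF j] False h by simp
      ultimately show ?thesis by linarith
    qed
  next
    fix j assume j: "j \<in> {1..n}" and h: "real j / real n - e / 2 > 0"
    have qle: "real j / real n \<le> 1" using j npos by (simp add: divide_le_eq_1)
    have P0: "0 \<le> price_at F (real j / real n - e / 2)" using P_range[of "real j / real n - e / 2"] qle e by simp
    show "pdec e S j \<le> price_at F (real j / real n - e / 2) + e / 2"
    proof (cases "real j / real n > 1 - e/2")
      case True
      then have "pdec e S j = 0" using h unfolding pdec_def n_def by auto
      then show ?thesis using P0 e by simp
    next
      case False
      have "price_at F (real j / real n) \<le> price_at F (real j / real n - e / 2)"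
        using P_anti[of "real j / real n - e/2" "real j / real n"] qle e by simp
      moreover have "\<bar>pdec e S j - price_at F (real j / real n)\<bar> \<le> e/2"
        using mid[OF j] False h by simp
      ultimately show ?thesis by linarith
    qed
  qed
  show ?thesis
    using Ssub Sne cS cKK lev unfolding n_def th_def T_def by (intro exI[of _ S]) auto
qed

end


lemma surj_code:
  assumes fin: "finite S" and ne: "S \<noteq> {}" and cM: "card S \<le> M" and sub: "S \<subseteq> X"
  shows "\<exists>c \<in> {..<M} \<rightarrow>\<^sub>E X. c ` {..<M} = S"
proof -
  obtain f where f: "bij_betw f {0..<card S} S" using ex_bij_betw_nat_finite[OF fin] by blast
  obtain s0 where s0: "s0 \<in> S" using ne by blast
  define c where "c i = (if i < card S then f i else if i < M then s0 else undefined)" for i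
  have "c ` {..<M} = S"
  proof
    show "c ` {..<M} \<subseteq> S" using f s0 unfolding c_def bij_betw_def by auto
    show "S \<subseteq> c ` {..<M}"
    proof
      fix x assume "x \<in> S"
      then obtain i where "i < card S" "f i = x" using f unfolding bij_betw_def by force
      then show "x \<in> c ` {..<M}" using cM unfolding c_def by (intro image_eqI[of _ _ i]) auto
    qed
  qed
  moreover have "c \<in> {..<M} \<rightarrow>\<^sub>E X"
  proof (rule PiE_I)
    fix i assume "i \<in> {..<M}"
    then have "c i \<in> S" using \<open>c ` {..<M} = S\<close> by blast
    then show "c i \<in> X" using sub by blast
  next
    fix i assume "i \<notin> {..<M}"
    then show "c i = undefined" using cM unfolding c_def by auto
  qed
  ultimately show ?thesis by blast
qed

lemma describable_from:
  assumes e: "0 < e" "e \<le> 1"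
    and M: "real M \<ge> 6 + 2 * real (TTe e) + ln (real (nn e) + 2) / thh e"
    and b: "((nn e + 1) * (VV e + 1))^M \<le> 2^b"
  shows "describable regular_01 b e"
proof -
  define X where "X = {..nn e} \<times> {..VV e}"
  define C where "C = (\<lambda>c. Gcode e (c ` {..<M})) ` ({..<M} \<rightarrow>\<^sub>E X)"
  have n1: "nn e \<ge> 1" using params[OF e] by simp
  have fin: "finite C" unfolding C_def X_def by (intro finite_imageI finite_PiE) auto
  have "card C \<le> card ({..<M} \<rightarrow>\<^sub>E X)" unfolding C_def by (rule card_image_le) (simp add: X_def finite_PiE)
  also have "\<dots> = card X ^ M" by (simp add: card_PiE)
  also have "card X = (nn e + 1) * (VV e + 1)" unfolding X_def by (simp add: card_cartesian_product)
  finally have cC: "card C \<le> 2^b" using b by simp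
  have cdfs: "\<forall>G\<in>C. is_cdf G" unfolding C_def Gcode_def using Gdec_cdf[OF n1] by auto
  have appr: "\<exists>G\<in>C. levy_dist F G \<le> e" if F: "F \<in> regular_01" for F
  proof -
    interpret cdf01 F using F unfolding regular_01_def by unfold_locales auto
    have reg: "myerson_regular F" using F unfolding regular_01_def by auto
    obtain S where S: "S \<subseteq> X" "S \<noteq> {}"
      "real (card S) \<le> 6 + 2 * real (TTe e) + ln (real (nn e) + 2) / thh e" "levy_dist F (Gcode e S) \<le> e"
      using approx_exists[OF reg e] unfolding X_def by blast
    have finS: "finite S" using S(1) finite_subset unfolding X_def by blast
    have "real (card S) \<le> real M" using S(3) M by linarith
    then have "card S \<le> M" by simp
    then obtain c where c: "c \<in> {..<M} \<rightarrow>\<^sub>E X" "c ` {..<M} = S" using surj_code[OF finS S(2) _ S(1)] by blast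
    then have "Gcode e S \<in> C" unfolding C_def by force
    then show ?thesis using S(4) by blast
  qed
  show ?thesis unfolding describable_def using fin cC cdfs appr by blast
qed


lemma nat_ceil_le: "(y::real) \<ge> 0 \<Longrightarrow> real (nat \<lceil>y\<rceil>) \<le> y + 1"
  by (simp add: of_nat_nat)

lemma upper_arith:
  fixes e :: real
  assumes e: "0 < e" "e < 1/100"
  shows "describable regular_01 (nat \<lceil>1300 * e powr (-1/2) * (ln (1/e))^2\<rceil>) e"
proof -
  define s where "s = sqrt e"
  define L where "L = ln (1/e)"
  define x where "x = L / s"
  have s0: "s > 0" unfolding s_def using e by simp
  have "sqrt e \<le> sqrt (1/100)" using e by simp
  moreover have "sqrt (1/100::real) = 1/10" by (simp add: real_sqrt_divide)
  ultimately have s1: "s \<le> 1/10" unfolding s_def by simp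
  have "exp 1 \<le> 1/e"
  proof -
    have "exp 1 < (272/100::real)" by (rule e_less_272)
    moreover have "100 < 1/e" using e by (simp add: field_simps)
    ultimately show ?thesis by simp
  qed
  then have L1: "L \<ge> 1" unfolding L_def using e by (simp add: ln_ge_iff)
  have x10: "x \<ge> 10"
  proof -
    have "L / s \<ge> 1 / (1/10)" using L1 s0 s1 by (intro frac_le) auto
    then show ?thesis unfolding x_def by simp
  qed
  have thh: "thh e = s / 20" unfolding thh_def s_def by simp
  have nn: "real (nn e) \<le> 4/e + 1" using params[of e] e by simp
  have lnb: "ln (real (nn e) + c) \<le> 2 * L" if c: "0 < c" "c \<le> 2" for c
  proof -
    have "real (nn e) + c \<le> 4/e + 3" using nn c by simp
    also have "\<dots> \<le> 1/e^2"
    proof -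
      have "4/e + 3 \<le> 7/e" using e by (simp add: field_simps)
      also have "7/e \<le> 1/e^2" using e by (simp add: field_simps power2_eq_square)
      finally show ?thesis .
    qed
    finally have "ln (real (nn e) + c) \<le> ln (1/e^2)" using c by (intro ln_mono) auto
    also have "ln (1/e^2) = 2 * L" unfolding L_def using e by (simp add: ln_div ln_realpow)
    finally show ?thesis .
  qed
  have T: "real (TTe e) \<le> 80 * x + 1"
  proof -
    have "0 \<le> 2 * ln (real (nn e) + 1) / thh e" using s0 unfolding thh by simp
    then have "real (TTe e) \<le> 2 * ln (real (nn e) + 1) / thh e + 1" unfolding TTe_def by (rule nat_ceil_le)
    also have "2 * ln (real (nn e) + 1) / thh e = 40 * ln (real (nn e) + 1) / s" unfolding thh by simp
    also have "\<dots> \<le> 40 * (2 * L) / s" using lnb[of 1] s0 by (intro divide_right_mono) auto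
    also have "\<dots> = 80 * x" unfolding x_def by simp
    finally show ?thesis by simp
  qed
  have C2: "ln (real (nn e) + 2) / thh e \<le> 40 * x"
  proof -
    have "ln (real (nn e) + 2) / thh e = 20 * ln (real (nn e) + 2) / s" unfolding thh by simp
    also have "\<dots> \<le> 20 * (2 * L) / s" using lnb[of 2] s0 by (intro divide_right_mono) auto
    also have "\<dots> = 40 * x" unfolding x_def by simp
    finally show ?thesis .
  qed
  define B where "B = 6 + 2 * real (TTe e) + ln (real (nn e) + 2) / thh e"
  define M where "M = nat \<lceil>B\<rceil>"
  have MB: "real M \<ge> B" unfolding M_def by linarith
  have B0: "B \<ge> 0" unfolding B_def using lnb s0 thh by simp
  have Mx: "real M \<le> 202 * x"
  proof -
    have "real M \<le> B + 1" unfolding M_def using B0 by (rule nat_ceil_le)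
    also have "\<dots> \<le> 6 + 2 * (80 * x + 1) + 40 * x + 1"
    proof -
      define Q where "Q = ln (real (nn e) + 2) / thh e"
      have "Q \<le> 40 * x" using C2 unfolding Q_def .
      then show ?thesis unfolding B_def Q_def[symmetric] using T by (smt (verit))
    qed
    finally show ?thesis using x10 by (smt (verit))
  qed
  define X where "X = (nn e + 1) * (VV e + 1)"
  have X: "real X \<le> 1 / e^4"
  proof -
    have a: "real (nn e + 1) \<le> 6/e" using nn e by (simp add: field_simps)
    have "real (VV e) \<le> 8 / e^2 + 1" unfolding VV_def using e by (simp add: of_nat_nat)
    moreover have "1 \<le> 1 / e^2" using e by (simp add: power_le_one)
    ultimately have "real (VV e + 1) \<le> 10 * (1 / e^2)" by simp
    then have b: "real (VV e + 1) \<le> 10 / e^2" by simp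
    have "real X \<le> (6/e) * (10/e^2)" unfolding X_def using a b e by (simp only: of_nat_mult) (intro mult_mono, auto)
    also have "\<dots> = 60 / e^3" by (simp add: power2_eq_square power3_eq_cube)
    also have "\<dots> \<le> 1 / e^4" using e by (simp add: field_simps power_eq_if)
    finally show ?thesis .
  qed
  have X0: "0 < real X" unfolding X_def by (simp only: of_nat_0_less_iff) simp
  define b where "b = nat \<lceil>1300 * e powr (-1/2) * (ln (1/e))^2\<rceil>"
  have ep: "e powr (-1/2) = 1 / s"
  proof -
    have "e powr (-1/2) = e powr (- (1/2))" by simp
    also have "\<dots> = inverse (e powr (1/2))" by (rule powr_minus)
    also have "e powr (1/2) = sqrt e" using e by (simp add: powr_half_sqrt)
    finally show ?thesis unfolding s_def by (simp add: inverse_eq_divide)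
  qed
  have Lx: "L * x \<ge> 0" using L1 x10 by simp
  have eqb: "1300 * e powr (-1/2) * (ln (1/e))^2 = 1300 * (L * x)"
    unfolding ep x_def L_def[symmetric] by (simp add: power2_eq_square)
  have bb: "real b \<ge> 1300 * (L * x)" unfolding b_def eqb by linarith
  have "real (X ^ M) = real X ^ M" by (rule of_nat_power)
  also have "\<dots> \<le> (1/e^4)^M" by (rule power_mono[OF X]) (use X0 in simp)
  also have "(1/e^4)^M = exp (4 * L * real M)"
  proof -
    have "exp (real 4 * ln e) = exp (ln e) ^ 4" by (rule exp_of_nat_mult)
    then have "exp (4 * ln e) = e^4" using e by simp
    then have "1/e^4 = exp (- (4 * ln e))" by (simp add: exp_minus inverse_eq_divide)
    then have "1/e^4 = exp (4 * L)" unfolding L_def using e by (simp add: ln_div)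
    then have "(1/e^4)^M = exp (4 * L) ^ M" by simp
    also have "\<dots> = exp (real M * (4 * L))" by (rule exp_of_nat_mult[symmetric])
    finally show ?thesis by (simp only: mult_ac)
  qed
  also have "exp (4 * L * real M) \<le> exp (real b * ln 2)"
  proof -
    have "4 * L * real M \<le> 4 * L * (202 * x)" using Mx L1 by (intro mult_left_mono) auto
    also have "\<dots> = 808 * (L * x)" by simp
    also have "\<dots> \<le> (2/3) * (1300 * (L * x))" using Lx by simp
    also have "\<dots> \<le> ln 2 * (1300 * (L * x))" using ln2_ge_two_thirds Lx by (intro mult_right_mono) auto
    also have "\<dots> \<le> ln 2 * real b" using bb by (intro mult_left_mono) auto
    finally have "4 * L * real M \<le> real b * ln 2" by (simp only: mult.commute)
    then show ?thesis by (rule exp_mono)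
  qed
  also have "exp (real b * ln 2) = exp (ln 2) ^ b" by (rule exp_of_nat_mult)
  also have "\<dots> = 2 ^ b" by simp
  finally have "real (X ^ M) \<le> real ((2::nat) ^ b)" by simp
  then have XM: "X ^ M \<le> 2 ^ b" by (simp only: of_nat_le_iff)
  show ?thesis unfolding b_def[symmetric] by (rule describable_from[OF _ _ _ XM[unfolded X_def]]) (use e MB in \<open>auto simp: B_def\<close>)
qed


definition tt :: "nat \<Rightarrow> nat \<Rightarrow> real" where "tt N k = real k / real (N+1)"

definition hm :: "nat \<Rightarrow> nat set \<Rightarrow> real \<Rightarrow> real" where
  "hm N S v = Max (insert 0 ((\<lambda>k. 2 * tt N k * v - (tt N k)^2) ` S))"

definition FS :: "nat \<Rightarrow> nat set \<Rightarrow> real \<Rightarrow> real" where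
  "FS N S v = (if v < 0 then 0 else if v < 1 then 1 - 1 / (1 + hm N S v) else 1)"

definition gS where "gS N S v = 1 - 1 / (1 + hm N S v)"

context
  fixes N :: nat and S :: "nat set"
  assumes SN: "S \<subseteq> {1..N}"
begin

lemma finS: "finite S" using SN finite_subset by blast

lemma tt_range: "k \<in> S \<Longrightarrow> 0 < tt N k \<and> tt N k < 1" using SN unfolding tt_def by auto

lemma hm_ge: "k \<in> S \<Longrightarrow> 2 * tt N k * v - (tt N k)^2 \<le> hm N S v"
  unfolding hm_def using finS by (intro Max_ge) auto

lemma hm_ge0: "0 \<le> hm N S v" unfolding hm_def using finS by (intro Max_ge) auto

lemma hm_le: "(\<And>k. k \<in> S \<Longrightarrow> 2 * tt N k * v - (tt N k)^2 \<le> c) \<Longrightarrow> 0 \<le> c \<Longrightarrow> hm N S v \<le> c"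
  unfolding hm_def using finS by (subst Max_le_iff) auto

lemma hm_lip: "hm N S u \<le> hm N S v + 2 * \<bar>u - v\<bar>"
proof (rule hm_le)
  fix k assume k: "k \<in> S"
  have "2 * tt N k * u - (tt N k)^2 = (2 * tt N k * v - (tt N k)^2) + 2 * tt N k * (u - v)" by (simp add: algebra_simps)
  also have "2 * tt N k * (u - v) \<le> 2 * \<bar>u - v\<bar>"
  proof -
    have "tt N k * (u - v) \<le> tt N k * \<bar>u - v\<bar>" using tt_range[OF k] by (intro mult_left_mono) auto
    also have "\<dots> \<le> 1 * \<bar>u - v\<bar>" using tt_range[OF k] by (intro mult_right_mono) auto
    finally have "tt N k * (u - v) \<le> 1 * \<bar>u - v\<bar>" .
    then show ?thesis by simp
  qed
  finally show "2 * tt N k * u - (tt N k)^2 \<le> hm N S v + 2 * \<bar>u - v\<bar>" using hm_ge[OF k, of v] by simp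
next
  show "0 \<le> hm N S v + 2 * \<bar>u - v\<bar>" using hm_ge0[of v] by simp
qed

lemma hm_mono: "u \<le> v \<Longrightarrow> hm N S u \<le> hm N S v"
proof (rule hm_le)
  fix k assume k: "k \<in> S" and uv: "u \<le> v"
  have "2 * tt N k * u \<le> 2 * tt N k * v" using tt_range[OF k] uv by (intro mult_left_mono) auto
  then show "2 * tt N k * u - (tt N k)^2 \<le> hm N S v" using hm_ge[OF k, of v] by simp
qed (rule hm_ge0)

lemma hm_convex:
  assumes m: "0 \<le> m" "m \<le> 1"
  shows "hm N S (m * a + (1 - m) * b) \<le> m * hm N S a + (1 - m) * hm N S b"
proof (rule hm_le)
  fix k assume k: "k \<in> S"
  have "2 * tt N k * (m * a + (1 - m) * b) - (tt N k)^2
      = m * (2 * tt N k * a - (tt N k)^2) + (1 - m) * (2 * tt N k * b - (tt N k)^2)" by (simp add: algebra_simps)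
  also have "\<dots> \<le> m * hm N S a + (1 - m) * hm N S b"
    using hm_ge[OF k] m by (intro add_mono mult_left_mono) auto
  finally show "2 * tt N k * (m * a + (1 - m) * b) - (tt N k)^2 \<le> m * hm N S a + (1 - m) * hm N S b" .
next
  show "0 \<le> m * hm N S a + (1 - m) * hm N S b" using hm_ge0 m by simp
qed

lemma hm_0: "hm N S 0 = 0"
  using hm_le[of 0 0] hm_ge0[of 0] tt_range by (force simp: power2_eq_square)

lemma hm_le1: "v \<le> 1 \<Longrightarrow> hm N S v \<le> 1"
proof (rule hm_le)
  fix k assume k: "k \<in> S" and v: "v \<le> 1"
  have "2 * tt N k * v \<le> 2 * tt N k * 1" using tt_range[OF k] v by (intro mult_left_mono) auto
  then have "2 * tt N k * v - (tt N k)^2 \<le> 2 * tt N k - (tt N k)^2" by simp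
  also have "\<dots> \<le> 1" using sum_squares_ge_zero[of "tt N k - 1" 0] by (simp add: power2_eq_square algebra_simps)
  finally show "2 * tt N k * v - (tt N k)^2 \<le> 1" .
qed simp

lemma gS_lip: "\<bar>gS N S u - gS N S v\<bar> \<le> 2 * \<bar>u - v\<bar>"
proof -
  have hu: "0 \<le> hm N S u" and hv: "0 \<le> hm N S v" by (rule hm_ge0)+
  have "gS N S u - gS N S v = (hm N S u - hm N S v) / ((1 + hm N S u) * (1 + hm N S v))"
    unfolding gS_def using hu hv by (simp add: field_simps)
  then have "\<bar>gS N S u - gS N S v\<bar> = \<bar>hm N S u - hm N S v\<bar> / ((1 + hm N S u) * (1 + hm N S v))"
    using hu hv by (simp add: abs_divide)
  also have "\<dots> \<le> \<bar>hm N S u - hm N S v\<bar>"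
  proof -
    have D1: "1 \<le> (1 + hm N S u) * (1 + hm N S v)" using hu hv
      by (metis add_increasing2 le_add_same_cancel1 mult_1_left mult_mono zero_le_one)
    have "\<bar>hm N S u - hm N S v\<bar> * 1 \<le> \<bar>hm N S u - hm N S v\<bar> * ((1 + hm N S u) * (1 + hm N S v))"
      using D1 by (intro mult_left_mono) auto
    then show ?thesis using D1 by (simp add: divide_le_eq)
  qed
  also have "\<dots> \<le> 2 * \<bar>u - v\<bar>" using hm_lip[of u v] hm_lip[of v u] by (simp add: abs_le_iff abs_minus_commute)
  finally show ?thesis .
qed

lemma gS_mono: "u \<le> v \<Longrightarrow> gS N S u \<le> gS N S v"
  unfolding gS_def using hm_mono[of u v] hm_ge0[of u] by (simp add: frac_le)

lemma gS_range: "0 \<le> gS N S v" "gS N S v \<le> 1"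
  unfolding gS_def using hm_ge0[of v] by auto

lemma FS_gS: "0 \<le> v \<Longrightarrow> v < 1 \<Longrightarrow> FS N S v = gS N S v" unfolding FS_def gS_def by simp

lemma FS_range: "0 \<le> FS N S v \<and> FS N S v \<le> 1"
  unfolding FS_def using gS_range[of v] unfolding gS_def by auto

lemma FS_mono: "u \<le> v \<Longrightarrow> FS N S u \<le> FS N S v"
proof -
  assume uv: "u \<le> v"
  show ?thesis
  proof (cases "u < 0")
    case True then show ?thesis using FS_range[of v] unfolding FS_def by simp
  next
    case False
    show ?thesis
    proof (cases "v < 1")
      case True
      then show ?thesis using False uv FS_gS[of u] FS_gS[of v] gS_mono[OF uv] by simp
    next
      case False
      then show ?thesis using FS_range[of u] uv unfolding FS_def by auto
    qed
  qed
qed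

lemma gS_tendsto: "(gS N S \<longlongrightarrow> gS N S x) (at_right x)"
proof (rule tendstoI)
  fix d :: real assume d: "d > 0"
  show "eventually (\<lambda>y. dist (gS N S y) (gS N S x) < d) (at_right x)"
    unfolding eventually_at_right_field
  proof (intro exI[of _ "x + d/4"] conjI allI impI)
    show "x < x + d/4" using d by simp
    fix y assume y: "x < y" "y < x + d/4"
    have "dist (gS N S y) (gS N S x) \<le> 2 * \<bar>y - x\<bar>" using gS_lip[of y x] by (simp add: dist_real_def)
    also have "\<dots> < d" using y d by simp
    finally show "dist (gS N S y) (gS N S x) < d" .
  qed
qed

lemma FS_cdf: "is_cdf (FS N S)"
  unfolding is_cdf_def
proof (intro conjI allI)
  show "mono (FS N S)" unfolding mono_def using FS_mono by blast
next
  fix x :: real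
  have "(FS N S \<longlongrightarrow> FS N S x) (at_right x)"
  proof (cases "x < 0")
    case True
    have "eventually (\<lambda>y. FS N S y = FS N S x) (at_right x)"
      unfolding eventually_at_right_field using True by (intro exI[of _ 0]) (auto simp: FS_def)
    then show ?thesis by (rule tendsto_eventually)
  next
    case False
    show ?thesis
    proof (cases "x < 1")
      case True
      have "eventually (\<lambda>y. gS N S y = FS N S y) (at_right x)"
        unfolding eventually_at_right_field using True False by (intro exI[of _ 1]) (auto simp: FS_gS)
      moreover have "FS N S x = gS N S x" using True False by (simp add: FS_gS)
      ultimately show ?thesis using gS_tendsto[of x] by (simp add: tendsto_cong)
    next
      case False
      have "eventually (\<lambda>y. FS N S y = FS N S x) (at_right x)"
        using eventually_at_right_less[of x] by eventually_elim (use False in \<open>auto simp: FS_def\<close>)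
      then show ?thesis by (rule tendsto_eventually)
    qed
  qed
  then show "continuous (at_right x) (FS N S)" by (simp add: continuous_within)
next
  have "eventually (\<lambda>y. FS N S y = 0) at_bot"
    using eventually_gt_at_bot[of 0] by eventually_elim (auto simp: FS_def)
  then show "(FS N S \<longlongrightarrow> 0) at_bot" by (rule tendsto_eventually)
next
  have "eventually (\<lambda>y. FS N S y = 1) at_top"
    using eventually_ge_at_top[of 1] by eventually_elim (auto simp: FS_def)
  then show "(FS N S \<longlongrightarrow> 1) at_top" by (rule tendsto_eventually)
qed

lemma FS_supp: "supported_01 (FS N S)" unfolding supported_01_def FS_def by simp

lemma FS_cdf01: "cdf01 (FS N S)" by unfold_locales (rule FS_cdf, rule FS_supp)

lemma FS_cl: assumes v: "0 \<le> v" "v \<le> 1" shows "cdf_left (FS N S) v = gS N S v"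
proof -
  interpret cdf01 "FS N S" by (rule FS_cdf01)
  show ?thesis
  proof (cases "v = 0")
    case True
    then show ?thesis using cl_zero[of 0] hm_0 unfolding gS_def by simp
  next
    case False
    then have vpos: "v > 0" using v by simp
    have le: "cdf_left (FS N S) v \<le> gS N S v"
    proof (rule cl_least)
      fix u assume u: "u < v"
      show "FS N S u \<le> gS N S v"
      proof (cases "u < 0")
        case True then show ?thesis using gS_range[of v] unfolding FS_def by simp
      next
        case False
        then show ?thesis using FS_gS[of u] u v gS_mono[of u v] by simp
      qed
    qed
    have ge: "gS N S v \<le> cdf_left (FS N S) v"
    proof (rule ccontr)
      assume "\<not> gS N S v \<le> cdf_left (FS N S) v"
      then have lt: "cdf_left (FS N S) v < gS N S v" by simp
      define d where "d = min (v/2) ((gS N S v - cdf_left (FS N S) v)/4)"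
      have d: "d > 0" "d \<le> v/2" "d \<le> (gS N S v - cdf_left (FS N S) v)/4"
      proof -
        show "d > 0" unfolding d_def using lt vpos by simp
        show "d \<le> v/2" unfolding d_def by (rule min.cobounded1)
        show "d \<le> (gS N S v - cdf_left (FS N S) v)/4" unfolding d_def by (rule min.cobounded2)
      qed
      define u where "u = v - d"
      have u: "0 \<le> u" "u < v" "u < 1" unfolding u_def using d v by auto
      have "FS N S u \<le> cdf_left (FS N S) v" by (rule cl_upper[OF u(2)])
      moreover have "FS N S u = gS N S u" using u by (simp add: FS_gS)
      moreover have "\<bar>gS N S u - gS N S v\<bar> \<le> 2 * \<bar>u - v\<bar>" by (rule gS_lip)
      moreover have "\<bar>u - v\<bar> = d" unfolding u_def using d by simp
      ultimately show False using d lt by (simp add: abs_le_iff)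
    qed
    show ?thesis using le ge by simp
  qed
qed

lemma FS_TT: "0 \<le> v \<Longrightarrow> v \<le> 1 \<Longrightarrow> TT (FS N S) v = 1 / (1 + hm N S v)"
  unfolding TT_def using FS_cl unfolding gS_def by simp

lemma FS_regular: "FS N S \<in> regular_01"
proof -
  interpret cdf01 "FS N S" by (rule FS_cdf01)
  have "myerson_regular (FS N S)"
  proof (rule regular_suff)
    fix v1 v2 q1 q2 l :: real
    assume v1: "v1 \<in> {0..1}" and v2: "v2 \<in> {0..1}" and q1: "0 \<le> q1" and q2: "0 \<le> q2"
      and l: "0 \<le> l" "l \<le> 1" and T1: "q1 \<le> TT (FS N S) v1" and T2: "q2 \<le> TT (FS N S) v2"
      and qp: "0 < l * q1 + (1 - l) * q2"
    define q where "q = l * q1 + (1 - l) * q2"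
    define m where "m = l * q1 / q"
    have qpos: "q > 0" using qp q_def by simp
    have lq: "l * q1 \<le> q" unfolding q_def using mult_nonneg_nonneg[of "1-l" q2] l q2 by simp
    have m: "0 \<le> m" "m \<le> 1" "1 - m = (1 - l) * q2 / q"
    proof -
      show "0 \<le> m" unfolding m_def using qpos l q1 by simp
      show "m \<le> 1" unfolding m_def using qpos lq by simp
      show "1 - m = (1 - l) * q2 / q" unfolding m_def using qpos unfolding q_def by (simp add: field_simps)
    qed
    define h1 where "h1 = hm N S v1"
    define h2 where "h2 = hm N S v2"
    have h1: "0 \<le> h1" and h2: "0 \<le> h2" unfolding h1_def h2_def by (rule hm_ge0)+
    have "q1 \<le> 1 / (1 + h1)" using T1 FS_TT[of v1] v1 unfolding h1_def by simp
    then have c1: "q1 * (1 + h1) \<le> 1" using h1 by (simp add: le_divide_eq)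
    have "q2 \<le> 1 / (1 + h2)" using T2 FS_TT[of v2] v2 unfolding h2_def by simp
    then have c2: "q2 * (1 + h2) \<le> 1" using h2 by (simp add: le_divide_eq)
    have weq: "(l * q1 * v1 + (1 - l) * q2 * v2) / q = m * v1 + (1 - m) * v2"
      unfolding m(3) unfolding m_def using qpos by (simp add: field_simps)
    define w where "w = m * v1 + (1 - m) * v2"
    have w01: "0 \<le> w" "w \<le> 1"
    proof -
      have a: "0 \<le> m * v1" "m * v1 \<le> m" using m(1,2) v1 by (auto intro: mult_left_le)
      have b: "0 \<le> (1 - m) * v2" "(1 - m) * v2 \<le> 1 - m" using m(1,2) v2 by (auto intro: mult_left_le)
      show "0 \<le> w" "w \<le> 1" unfolding w_def using a b by linarith+
    qed
    have hw: "hm N S w \<le> m * h1 + (1 - m) * h2" unfolding w_def h1_def h2_def by (rule hm_convex[OF m(1,2)])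
    have "q * (1 + hm N S w) \<le> q * (1 + (m * h1 + (1 - m) * h2))" using hw qpos by simp
    also have "\<dots> = l * q1 * (1 + h1) + (1 - l) * q2 * (1 + h2)"
    proof -
      have qm: "q * m = l * q1" unfolding m_def using qpos by simp
      have qm': "q * (1 - m) = (1 - l) * q2" using qm unfolding q_def by (simp add: algebra_simps)
      have "q * (1 + (m * h1 + (1 - m) * h2)) = q + (q * m) * h1 + (q * (1 - m)) * h2" by (simp add: algebra_simps)
      also have "\<dots> = q + l * q1 * h1 + (1 - l) * q2 * h2" unfolding qm qm' by simp
      also have "\<dots> = l * q1 * (1 + h1) + (1 - l) * q2 * (1 + h2)" unfolding q_def by (simp add: algebra_simps)
      finally show ?thesis .
    qed
    also have "\<dots> \<le> l * 1 + (1 - l) * 1"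
    proof -
      have "l * (q1 * (1 + h1)) \<le> l * 1" using c1 l by (intro mult_left_mono) auto
      moreover have "(1 - l) * (q2 * (1 + h2)) \<le> (1 - l) * 1" using c2 l by (intro mult_left_mono) auto
      ultimately show ?thesis by (simp add: mult.assoc)
    qed
    finally have "q * (1 + hm N S w) \<le> 1" by simp
    then have "q \<le> 1 / (1 + hm N S w)" using hm_ge0[of w] by (simp add: field_simps)
    then show "l * q1 + (1 - l) * q2 \<le> TT (FS N S) ((l * q1 * v1 + (1 - l) * q2 * v2) / (l * q1 + (1 - l) * q2))"
      unfolding q_def[symmetric] weq w_def[symmetric] using FS_TT[OF w01] by simp
  qed
  then show ?thesis unfolding regular_01_def using FS_cdf FS_supp by simp
qed

end


lemma cdf_bounds: assumes "is_cdf F" shows "0 \<le> F v" "F v \<le> 1"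
proof -
  have m: "x \<le> y \<Longrightarrow> F x \<le> F y" for x y using assms unfolding is_cdf_def mono_def by auto
  have l1: "(F \<longlongrightarrow> 1) at_top" and l0: "(F \<longlongrightarrow> 0) at_bot" using assms unfolding is_cdf_def by auto
  have "eventually (\<lambda>y. F v \<le> F y) at_top" using eventually_ge_at_top[of v] by eventually_elim (rule m)
  from tendsto_lowerbound[OF l1 this] show "F v \<le> 1" by simp
  have "eventually (\<lambda>y. F y \<le> F v) at_bot" using eventually_le_at_bot[of v] by eventually_elim (rule m)
  from tendsto_upperbound[OF l0 this] show "0 \<le> F v" by simp
qed

lemma levy_close:
  assumes F: "is_cdf F" and G: "is_cdf G" and le: "levy_dist F G \<le> e" and e: "e > 0"
  shows "F (v - 3*e/2) - 3*e/2 \<le> G v \<and> G v \<le> F (v + 3*e/2) + 3*e/2"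
proof -
  define A where "A = {e. e \<ge> 0 \<and> (\<forall>v. F (v - e) - e \<le> G v \<and> G v \<le> F (v + e) + e)}"
  have "1 \<in> A" unfolding A_def
  proof (simp, intro allI conjI)
    fix v
    show "F (v - 1) - 1 \<le> G v" using cdf_bounds[OF F, of "v-1"] cdf_bounds[OF G, of v] by linarith
    show "G v \<le> F (v + 1) + 1" using cdf_bounds[OF F, of "v+1"] cdf_bounds[OF G, of v] by linarith
  qed
  then have ne: "A \<noteq> {}" by blast
  have bdd: "bdd_below A" unfolding A_def by (rule bdd_belowI[where m=0]) auto
  have "Inf A < 3*e/2" using le e unfolding levy_dist_def A_def[symmetric] by simp
  then obtain e' where e': "e' \<in> A" "e' < 3*e/2" using cInf_lessD[OF ne] by blast
  have m: "x \<le> y \<Longrightarrow> F x \<le> F y" for x y using F unfolding is_cdf_def mono_def by auto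
  have "F (v - e') - e' \<le> G v" "G v \<le> F (v + e') + e'" using e' unfolding A_def by auto
  moreover have "F (v - 3*e/2) \<le> F (v - e')" "F (v + e') \<le> F (v + 3*e/2)" using e' by (auto intro: m)
  ultimately show ?thesis using e' by linarith
qed

lemma inv_diff: "0 < (a::real) \<Longrightarrow> 0 < b \<Longrightarrow> 1/b - 1/a = (a - b)/(a*b)"
  by (simp add: field_simps)

lemma separation:
  fixes e :: real
  assumes S: "S \<subseteq> {1..N}" and S': "S' \<subseteq> {1..N}" and j: "j \<in> S" "j \<notin> S'"
    and e: "e > 0" and d: "(1 / real (N+1))^2 \<ge> 20 * e"
  shows "\<exists>u. FS N S u > FS N S' (u + 3*e) + 3*e"
proof -
  define dl where "dl = 1 / real (N+1)"
  have dl0: "0 < dl" "dl \<le> 1" unfolding dl_def by auto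
  have jN: "1 \<le> j" "j \<le> N" using j S by auto
  have tj: "dl \<le> tt N j" "tt N j < 1"
  proof -
    show "dl \<le> tt N j" unfolding tt_def dl_def using jN by (intro divide_right_mono) auto
    show "tt N j < 1" unfolding tt_def using jN by (simp add: divide_less_eq)
  qed
  have "dl^2 \<le> dl" using dl0 by (simp add: power2_eq_square mult_left_le)
  then have dl20: "20 * e \<le> dl" using d unfolding dl_def by simp
  define u where "u = tt N j - 3 * e"
  have u: "0 \<le> u" "u < 1" unfolding u_def using tj dl20 e by auto
  have hS: "hm N S u \<ge> (tt N j)^2 - 6 * e"
  proof -
    have "hm N S u \<ge> 2 * tt N j * u - (tt N j)^2" by (rule hm_ge[OF S j(1)])
    moreover have "2 * tt N j * u - (tt N j)^2 = (tt N j)^2 - 6 * e * tt N j" unfolding u_def by (simp add: algebra_simps power2_eq_square)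
    moreover have "6 * e * tt N j \<le> 6 * e" using tj e by (simp add: mult_left_le)
    ultimately show ?thesis by linarith
  qed
  have hS': "hm N S' (tt N j) \<le> (tt N j)^2 - dl^2"
  proof (rule hm_le[OF S'])
    fix k assume k: "k \<in> S'"
    have kj: "k \<noteq> j" using k j by auto
    have "dl \<le> \<bar>tt N j - tt N k\<bar>"
    proof -
      have "1 \<le> \<bar>real j - real k\<bar>" using kj by (cases "j < k") auto
      then have "1 / real (N+1) \<le> \<bar>real j - real k\<bar> / real (N+1)" by (intro divide_right_mono) auto
      also have "\<dots> = \<bar>tt N j - tt N k\<bar>" unfolding tt_def diff_divide_distrib[symmetric] by (simp add: abs_divide)
      finally show ?thesis unfolding dl_def .
    qed
    then have "dl^2 \<le> \<bar>tt N j - tt N k\<bar>^2" using dl0 by (intro power_mono) auto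
    then have "dl^2 \<le> (tt N j - tt N k)^2" by simp
    moreover have "2 * tt N k * tt N j - (tt N k)^2 = (tt N j)^2 - (tt N j - tt N k)^2" by (simp add: algebra_simps power2_eq_square)
    ultimately show "2 * tt N k * tt N j - (tt N k)^2 \<le> (tt N j)^2 - dl^2" by linarith
  next
    show "0 \<le> (tt N j)^2 - dl^2" using tj dl0 by (simp add: power_mono)
  qed
  define H where "H = 1 + hm N S u"
  define H' where "H' = 1 + hm N S' (tt N j)"
  have H: "1 \<le> H" "H \<le> 2" unfolding H_def using hm_ge0[OF S] hm_le1[OF S] u by auto
  have H': "1 \<le> H'" "H' \<le> 2" unfolding H'_def using hm_ge0[OF S'] hm_le1[OF S'] tj by auto
  have diff: "H - H' \<ge> 14 * e" unfolding H_def H'_def using hS hS' d unfolding dl_def by linarith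
  have "1 / H' - 1 / H = (H - H') / (H * H')" using H H' by (intro inv_diff) auto
  also have "\<dots> \<ge> (H - H') / 4"
  proof -
    have "H * H' \<le> 2 * 2" using H H' by (intro mult_mono) auto
    moreover have "0 \<le> H - H'" using diff e by simp
    moreover have "0 < H * H'" using H H' by simp
    ultimately show ?thesis by (intro divide_left_mono) auto
  qed
  finally have "1 / H' - 1 / H \<ge> (H - H') / 4" .
  moreover have "(H - H') / 4 \<ge> (14 * e) / 4" using diff by (intro divide_right_mono) auto
  moreover have "(14 * e) / 4 > 3 * e" using e by simp
  ultimately have gap: "1 / H' - 1 / H > 3 * e" by linarith
  have "FS N S u = 1 - 1 / H" using u unfolding FS_def H_def by simp
  moreover have "u + 3 * e = tt N j" unfolding u_def by simp
  moreover have "FS N S' (tt N j) = 1 - 1 / H'" using tj dl0 unfolding FS_def H'_def by simp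
  ultimately have "FS N S u > FS N S' (u + 3*e) + 3*e" using gap by simp
  then show ?thesis by blast
qed


lemma lower_count:
  fixes e :: real
  assumes e: "e > 0" and d: "(1 / real (N+1))^2 \<ge> 20 * e" and desc: "describable regular_01 b e"
  shows "N \<le> b"
proof -
  obtain C where C: "finite C" "card C \<le> 2^b" "\<forall>G\<in>C. is_cdf G" "\<forall>F\<in>regular_01. \<exists>G\<in>C. levy_dist F G \<le> e"
    using desc unfolding describable_def by blast
  define phi where "phi S = (SOME G. G \<in> C \<and> levy_dist (FS N S) G \<le> e)" for S
  have phi: "phi S \<in> C \<and> levy_dist (FS N S) (phi S) \<le> e" if S: "S \<in> Pow {1..N}" for S
  proof -
    have "FS N S \<in> regular_01" using S by (intro FS_regular) auto
    then have "\<exists>G. G \<in> C \<and> levy_dist (FS N S) G \<le> e" using C(4) by blast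
    then show ?thesis unfolding phi_def by (rule someI_ex)
  qed
  have key: False if S: "S \<in> Pow {1..N}" and S': "S' \<in> Pow {1..N}" and eq: "phi S = phi S'"
      and j: "j \<in> S" "j \<notin> S'" for S S' j
  proof -
    obtain u where u: "FS N S u > FS N S' (u + 3*e) + 3*e"
      using separation[of S N S' j e] S S' j e d by auto
    define G where "G = phi S"
    have G: "is_cdf G" using phi[OF S] C(3) unfolding G_def by blast
    have l1: "levy_dist (FS N S) G \<le> e" using phi[OF S] unfolding G_def by blast
    have l2: "levy_dist (FS N S') G \<le> e" using phi[OF S'] eq unfolding G_def by simp
    have eq1: "u + 3*e/2 - 3*e/2 = u" and eq2: "u + 3*e/2 + 3*e/2 = u + 3*e" by simp_all
    have c1: "FS N S u - 3*e/2 \<le> G (u + 3*e/2)"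
      using levy_close[OF FS_cdf G l1 e, of "u + 3*e/2", THEN conjunct1, unfolded eq1] S by auto
    have c2: "G (u + 3*e/2) \<le> FS N S' (u + 3*e) + 3*e/2"
      using levy_close[OF FS_cdf G l2 e, of "u + 3*e/2", THEN conjunct2, unfolded eq2] S' by auto
    show False using c1 c2 u by linarith
  qed
  have inj: "inj_on phi (Pow {1..N})"
  proof (rule inj_onI)
    fix S S' assume S: "S \<in> Pow {1..N}" and S': "S' \<in> Pow {1..N}" and eq: "phi S = phi S'"
    show "S = S'"
    proof (rule ccontr)
      assume "S \<noteq> S'"
      then obtain j where "(j \<in> S \<and> j \<notin> S') \<or> (j \<in> S' \<and> j \<notin> S)" by blast
      then show False using key[OF S S' eq] key[OF S' S eq[symmetric]] by blast
    qed
  qed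
  have "phi ` Pow {1..N} \<subseteq> C" using phi by blast
  then have "card (phi ` Pow {1..N}) \<le> card C" by (rule card_mono[OF C(1)])
  moreover have "card (phi ` Pow {1..N}) = 2^N" using card_image[OF inj] by (simp add: card_Pow)
  ultimately have "(2::nat)^N \<le> card C" by simp
  then have "(2::nat)^N \<le> 2^b" using C(2) by (rule order.trans)
  then show ?thesis by (rule power_le_imp_le_exp[rotated]) simp
qed

lemma lower_one:
  fixes e :: real
  assumes e: "0 < e" "e < 1/400" and desc: "describable regular_01 b e"
  shows "real b \<ge> 1/10 * e powr (-1/2)"
proof -
  define z where "z = 1 / sqrt e"
  have z0: "z > 0" unfolding z_def using e by simp
  have "sqrt e \<le> sqrt (1/400)" using e by simp
  moreover have "sqrt (1/400::real) = 1/20" by (simp add: real_sqrt_divide)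
  ultimately have "sqrt e \<le> 1/20" by simp
  then have z20: "z \<ge> 20" unfolding z_def using e by (simp add: field_simps)
  define y where "y = 1 / sqrt (20 * e)"
  have y0: "y > 0" unfolding y_def using e by simp
  have yz: "y = z / sqrt 20" unfolding y_def z_def using e by (simp add: real_sqrt_mult)
  have s20: "sqrt 20 \<le> (5::real)"
  proof -
    show ?thesis by (rule real_le_lsqrt) auto
  qed
  have "z / 5 \<le> z / sqrt 20" using s20 z0 by (intro divide_left_mono) auto
  then have yz5: "y \<ge> z / 5" using yz by simp
  then have y4: "y \<ge> 4" using z20 by simp
  define N where "N = nat \<lfloor>y\<rfloor> - 1"
  have fl: "\<lfloor>y\<rfloor> \<ge> 4" using y4 by linarith
  have N1: "real (N + 1) = of_int \<lfloor>y\<rfloor>" unfolding N_def using fl by (simp add: of_nat_diff)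
  have "real (N + 1) \<le> y" unfolding N1 by simp
  then have "1 / y \<le> 1 / real (N+1)" using fl N1 by (intro divide_left_mono) auto
  then have "(1/y)^2 \<le> (1 / real (N+1))^2" using y0 by (intro power_mono) auto
  moreover have "(1/y)^2 = 20 * e" unfolding y_def using e by (simp add: power_divide)
  ultimately have d: "(1 / real (N+1))^2 \<ge> 20 * e" by simp
  have Nb: "N \<le> b" by (rule lower_count[OF e(1) d desc])
  have "real N \<ge> y - 2" unfolding N_def using fl by (simp add: of_nat_diff) linarith
  moreover have "y - 2 \<ge> z / 10" using yz5 z20 by simp
  moreover have "e powr (-1/2) = z"
  proof -
    have "e powr (-1/2) = e powr (- (1/2))" by simp
    also have "\<dots> = inverse (e powr (1/2))" by (rule powr_minus)
    also have "e powr (1/2) = sqrt e" using e by (simp add: powr_half_sqrt)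
    finally show ?thesis unfolding z_def by (simp add: inverse_eq_divide)
  qed
  ultimately show ?thesis using Nb by simp
qed

lemma lower_final:
  "\<exists>c \<epsilon>0. c > 0 \<and> \<epsilon>0 > 0 \<and> (\<forall>\<epsilon> b. 0 < \<epsilon> \<and> \<epsilon> < \<epsilon>0 \<and> describable regular_01 b \<epsilon>
            \<longrightarrow> real b \<ge> c * \<epsilon> powr (-1/2))"
  apply (rule exI[of _ "1/10"], rule exI[of _ "1/400"], intro conjI allI impI)
    apply simp
   apply simp
  apply (elim conjE)
  apply (rule lower_one)
    apply assumption+
  done



theorem theorem1:
  shows "(\<exists>c k \<epsilon>0. c > 0 \<and> \<epsilon>0 > 0 \<and> (\<forall>\<epsilon>. 0 < \<epsilon> \<and> \<epsilon> < \<epsilon>0 \<longrightarrow>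
            describable regular_01 (nat \<lceil>c * \<epsilon> powr (-1/2) * (ln (1/\<epsilon>)) ^ k\<rceil>) \<epsilon>))
       \<and> (\<exists>c \<epsilon>0. c > 0 \<and> \<epsilon>0 > 0 \<and> (\<forall>\<epsilon> b. 0 < \<epsilon> \<and> \<epsilon> < \<epsilon>0 \<and> describable regular_01 b \<epsilon>
            \<longrightarrow> real b \<ge> c * \<epsilon> powr (-1/2)))"
proof
  show "\<exists>c k \<epsilon>0. c > 0 \<and> \<epsilon>0 > 0 \<and> (\<forall>\<epsilon>. 0 < \<epsilon> \<and> \<epsilon> < \<epsilon>0 \<longrightarrow>
            describable regular_01 (nat \<lceil>c * \<epsilon> powr (-1/2) * (ln (1/\<epsilon>)) ^ k\<rceil>) \<epsilon>)"
    apply (rule exI[of _ 1300], rule exI[of _ 2], rule exI[of _ "1/100"], intro conjI allI impI)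
      apply simp
     apply simp
    apply (elim conjE)
    apply (rule upper_arith)
     apply assumption+
    done
  show "\<exists>c \<epsilon>0. c > 0 \<and> \<epsilon>0 > 0 \<and> (\<forall>\<epsilon> b. 0 < \<epsilon> \<and> \<epsilon> < \<epsilon>0 \<and> describable regular_01 b \<epsilon>
            \<longrightarrow> real b \<ge> c * \<epsilon> powr (-1/2))"
    by (rule lower_final)
qed

end
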